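(* Let $V$ be a $p$-dimensional real vector space, $\Lambda\subset V$ a full lattice, and $X=\bigcup_{\alpha\in\mathfrak I}X_\alpha\subset V$ an ordered $p$-complex which is a $\Lambda$-complex. Let $M_1<M_2$ be integers, $\widehat\Lambda:=\Lambda\times(M_2-M_1)\mathbb Z\subset V\times\mathbb R$, and $\omega:V\to\mathbb R$ linear. Then the ordered $(p+1)$-complex $Y=Y(X,\omega,[M_1,M_2])=\bigcup_{\gamma\in J}Y_\gamma\subset V\times\mathbb R$ is a $\widehat\Lambda$-complex. Moreover, defining $\Omega:V\times\mathbb R\to\mathbb R$ by $\Omega(s\times t)=\omega(s)+t$, for every $\gamma=(\alpha,v,\ell)\in J$ and every $\kappa\in Y_\gamma$, $$A(v)+\ell-1\le\Omega(\kappa)\le A(v)+\ell.$$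
   Context: Ordered complexes: an ordered $p$-complex in a $p$-dimensional real vector space $V$ is a family $X=\bigcup_{\alpha\in\mathfrak I}X_\alpha$ of $p$-simplices $X_\alpha\subset V$ (convex hulls of $p+1$ affinely independent points, vertex set $\mathrm{Vt}(X_\alpha)$), each with a total order $\prec_\alpha$ on $\mathrm{Vt}(X_\alpha)$; $[s_1,\dots,s_t]$ denotes a convex hull. For $x$ in a simplex $S$, $\mathrm{SpVt}(x)$ (spanning vertices) is the set of vertices of $S$ whose barycentric coordinate in $x$ is positive. $\Lambda$-complex: $X$ is a $\Lambda$-complex if (i) for all $\alpha,\beta$, $X_\alpha\cap X_\beta$ is empty or equals the convex hull of $\mathrm{Vt}(X_\alpha)\cap\mathrm{Vt}(X_\beta)$; (ii) for $v,w\in\mathrm{Vt}(X_\alpha)\cap\mathrm{Vt}(X_\beta)$, $v\prec_\alpha w\iff v\prec_\beta w$; (iii) if $v,w\in\mathrm{Vt}(X_\alpha)$, $\lambda\in\Lambda$ and $v+\lambda,w+\lambda\in\mathrm{Vt}(X_{\alpha'})$, then $v\prec_\alpha w\iff v+\lambda\prec_{\alpha'}w+\lambda$; (iv) the quotient map $V\to V/\Lambda$ restricted to $X$ is surjective and is injective on the union of the interiors of the $X_\alpha$; (v) if $x,x'\in X$, $\lambda\in\Lambda$, $x'=x+\lambda$, then $\mathrm{SpVt}(x')=\mathrm{SpVt}(x)+\lambda$ (by (i), $\mathrm{SpVt}(x)$ does not depend on the simplex containing $x$). Construction $Y(X,\omega,[M_1,M_2])$: let $A:V\to(0,1]$ be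 defined by $A(u)-\omega(u)\in\mathbb Z$, $0<A(u)\le1$, and put $a(u):=A(u)-\omega(u)\in\mathbb Z$. Define the order $\prec_\alpha^A$ on $\mathrm{Vt}(X_\alpha)$: $u\prec_\alpha^A u'$ iff $A(u)<A(u')$, or $A(u)=A(u')$ and $u\prec_\alpha u'$. Let $J=\{(\alpha,v,\ell):\alpha\in\mathfrak I,\ v\in\mathrm{Vt}(X_\alpha),\ \ell\in\mathbb Z,\ M_1\le\ell<M_2\}$. For $\gamma=(\alpha,v,\ell)\in J$, list $\mathrm{Vt}(X_\alpha)$ as $v_0\prec_\alpha^A\cdots\prec_\alpha^A v_p$ with $v=v_j$, and set $$Y_\gamma=[v_0\times(a(v_0)+\ell),\dots,v_j\times(a(v_j)+\ell),\ v_j\times(a(v_j)+\ell-1),\ v_{j+1}\times(a(v_{j+1})+\ell-1),\dots,v_p\times(a(v_p)+\ell-1)]\subset V\times\mathbb R,$$ ordered by: $\rho\prec_\gamma\rho'$ iff $\pi_V(\rho)\prec_\alpha\pi_V(\rho')$, or $\pi_V(\rho)=\pi_V(\rho')$ and $\pi_{\mathbb R}(\rho')<\pi_{\mathbb R}(\rho)$ ($\pi_V,\pi_{\mathbb R}$ the projections). Then $Y(X,\omega,[M_1,M_2]):=\bigcup_{\gamma\in J}Y_\gamma$. *)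

theory Defs
  imports "HOL-Analysis.Analysis"
begin

definition full_lattice :: "'a::euclidean_space set \<Rightarrow> bool" where
  "full_lattice L \<longleftrightarrow> (\<exists>B. independent B \<and> span B = UNIV \<and>
      L = {(\<Sum>b\<in>B. of_int (n b) *\<^sub>R b) | n. True})"

definition bary :: "'a::euclidean_space set \<Rightarrow> 'a \<Rightarrow> 'a \<Rightarrow> real" where
  "bary C x = (THE u. (\<forall>c. c \<notin> C \<longrightarrow> u c = 0) \<and> sum u C = 1 \<and> (\<Sum>c\<in>C. u c *\<^sub>R c) = x)"

definition SpVt :: "'a::euclidean_space set \<Rightarrow> 'a \<Rightarrow> 'a set" where
  "SpVt C x = {c \<in> C. bary C x c > 0}"

definition strict_total_on :: "'a set \<Rightarrow> ('a \<Rightarrow> 'a \<Rightarrow> bool) \<Rightarrow> bool" where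
  "strict_total_on S r \<longleftrightarrow>
     (\<forall>x\<in>S. \<not> r x x) \<and>
     (\<forall>x\<in>S. \<forall>y\<in>S. \<forall>z\<in>S. r x y \<longrightarrow> r y z \<longrightarrow> r x z) \<and>
     (\<forall>x\<in>S. \<forall>y\<in>S. x \<noteq> y \<longrightarrow> r x y \<or> r y x)"

text \<open>Ordered p-complex in the p-dimensional space 'a (p = DIM('a)):
  index set I, vertex sets Vt \<alpha> (simplex X_\<alpha> = convex hull (Vt \<alpha>)), orders ord \<alpha>.\<close>
definition ordered_complex :: "'i set \<Rightarrow> ('i \<Rightarrow> 'a::euclidean_space set) \<Rightarrow> ('i \<Rightarrow> 'a \<Rightarrow> 'a \<Rightarrow> bool) \<Rightarrow> bool" where
  "ordered_complex I Vt ord \<longleftrightarrow>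
     (\<forall>\<alpha>\<in>I. finite (Vt \<alpha>) \<and> card (Vt \<alpha>) = DIM('a) + 1 \<and> \<not> affine_dependent (Vt \<alpha>)
            \<and> strict_total_on (Vt \<alpha>) (ord \<alpha>))"

definition Lambda_complex :: "'a::euclidean_space set \<Rightarrow> 'i set \<Rightarrow> ('i \<Rightarrow> 'a set) \<Rightarrow> ('i \<Rightarrow> 'a \<Rightarrow> 'a \<Rightarrow> bool) \<Rightarrow> bool" where
  "Lambda_complex L I Vt ord \<longleftrightarrow>
     ordered_complex I Vt ord \<and>
     \<comment> \<open>(i)\<close>
     (\<forall>\<alpha>\<in>I. \<forall>\<beta>\<in>I. convex hull (Vt \<alpha>) \<inter> convex hull (Vt \<beta>) = {} \<or>
         convex hull (Vt \<alpha>) \<inter> convex hull (Vt \<beta>) = convex hull (Vt \<alpha> \<inter> Vt \<beta>)) \<and>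
     \<comment> \<open>(ii)\<close>
     (\<forall>\<alpha>\<in>I. \<forall>\<beta>\<in>I. \<forall>v\<in>Vt \<alpha> \<inter> Vt \<beta>. \<forall>w\<in>Vt \<alpha> \<inter> Vt \<beta>. ord \<alpha> v w \<longleftrightarrow> ord \<beta> v w) \<and>
     \<comment> \<open>(iii)\<close>
     (\<forall>\<alpha>\<in>I. \<forall>\<alpha>'\<in>I. \<forall>v\<in>Vt \<alpha>. \<forall>w\<in>Vt \<alpha>. \<forall>t\<in>L.
         v + t \<in> Vt \<alpha>' \<longrightarrow> w + t \<in> Vt \<alpha>' \<longrightarrow> (ord \<alpha> v w \<longleftrightarrow> ord \<alpha>' (v + t) (w + t))) \<and>
     \<comment> \<open>(iv) surjectivity of V \<rightarrow> V/L on X, injectivity on the union of interiors\<close>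
     (\<forall>y. \<exists>x\<in>(\<Union>\<alpha>\<in>I. convex hull (Vt \<alpha>)). y - x \<in> L) \<and>
     (\<forall>x\<in>(\<Union>\<alpha>\<in>I. interior (convex hull (Vt \<alpha>))). \<forall>x'\<in>(\<Union>\<alpha>\<in>I. interior (convex hull (Vt \<alpha>))).
         x - x' \<in> L \<longrightarrow> x = x') \<and>
     \<comment> \<open>(v)\<close>
     (\<forall>\<alpha>\<in>I. \<forall>\<alpha>'\<in>I. \<forall>x\<in>convex hull (Vt \<alpha>). \<forall>t\<in>L. x + t \<in> convex hull (Vt \<alpha>') \<longrightarrow>
         SpVt (Vt \<alpha>') (x + t) = (\<lambda>v. v + t) ` SpVt (Vt \<alpha>) x)"

text \<open>A(u) \<in> (0,1] with A(u) - \<omega>(u) \<in> \<int>; a(u) = A(u) - \<omega>(u).\<close>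
definition a_int :: "('a \<Rightarrow> real) \<Rightarrow> 'a \<Rightarrow> int" where
  "a_int \<omega> u = 1 - \<lceil>\<omega> u\<rceil>"

definition A_fun :: "('a \<Rightarrow> real) \<Rightarrow> 'a \<Rightarrow> real" where
  "A_fun \<omega> u = \<omega> u + of_int (a_int \<omega> u)"

definition ordA :: "('a \<Rightarrow> real) \<Rightarrow> ('i \<Rightarrow> 'a \<Rightarrow> 'a \<Rightarrow> bool) \<Rightarrow> 'i \<Rightarrow> 'a \<Rightarrow> 'a \<Rightarrow> bool" where
  "ordA \<omega> ord \<alpha> u u' \<longleftrightarrow> A_fun \<omega> u < A_fun \<omega> u' \<or> (A_fun \<omega> u = A_fun \<omega> u' \<and> ord \<alpha> u u')"

definition J_idx :: "'i set \<Rightarrow> ('i \<Rightarrow> 'a set) \<Rightarrow> int \<Rightarrow> int \<Rightarrow> ('i \<times> 'a \<times> int) set" where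
  "J_idx I Vt M1 M2 = {(\<alpha>, v, l). \<alpha> \<in> I \<and> v \<in> Vt \<alpha> \<and> M1 \<le> l \<and> l < M2}"

text \<open>Vertex set of Y_\<gamma>: v_0..v_j at height a+l, v_j..v_p at height a+l-1.\<close>
definition VtY :: "('a \<Rightarrow> real) \<Rightarrow> ('i \<Rightarrow> 'a set) \<Rightarrow> ('i \<Rightarrow> 'a \<Rightarrow> 'a \<Rightarrow> bool) \<Rightarrow> 'i \<times> 'a \<times> int \<Rightarrow> ('a \<times> real) set" where
  "VtY \<omega> Vt ord \<gamma> = (case \<gamma> of (\<alpha>, v, l) \<Rightarrow>
     {(u, of_int (a_int \<omega> u + l)) | u. u \<in> Vt \<alpha> \<and> (ordA \<omega> ord \<alpha> u v \<or> u = v)} \<union>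
     {(u, of_int (a_int \<omega> u + l - 1)) | u. u \<in> Vt \<alpha> \<and> (ordA \<omega> ord \<alpha> v u \<or> u = v)})"

definition ordY :: "('i \<Rightarrow> 'a \<Rightarrow> 'a \<Rightarrow> bool) \<Rightarrow> 'i \<times> 'a \<times> int \<Rightarrow> 'a \<times> real \<Rightarrow> 'a \<times> real \<Rightarrow> bool" where
  "ordY ord \<gamma> \<rho> \<rho>' = (case \<gamma> of (\<alpha>, v, l) \<Rightarrow>
     ord \<alpha> (fst \<rho>) (fst \<rho>') \<or> (fst \<rho> = fst \<rho>' \<and> snd \<rho>' < snd \<rho>))"

end

theory Submission
  imports Defs
begin
lemma bary_unique:
  fixes C :: "'a::euclidean_space set"
  assumes fin: "finite C" and ind: "\<not> affine_dependent C"
    and z: "\<forall>c. c \<notin> C \<longrightarrow> u c = 0" and s: "sum u C = 1" and e: "(\<Sum>c\<in>C. u c *\<^sub>R c) = x"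
  shows "bary C x = u"
proof -
  have uniq: "u' = u" if z': "\<forall>c. c \<notin> C \<longrightarrow> u' c = 0" and s': "sum u' C = 1"
    and e': "(\<Sum>c\<in>C. u' c *\<^sub>R c) = x" for u'
  proof -
    define U where "U = (\<lambda>c. u' c - u c)"
    have "sum U C = 0" using s s' by (simp add: U_def sum_subtractf)
    moreover have "(\<Sum>c\<in>C. U c *\<^sub>R c) = 0"
      using e e' by (simp add: U_def scaleR_diff_left sum_subtractf)
    ultimately have "\<forall>c\<in>C. U c = 0"
      using ind affine_dependent_explicit_finite[OF fin] by blast
    then show ?thesis using z z' unfolding U_def fun_eq_iff by (metis eq_iff_diff_eq_0)
  qed
  show ?thesis unfolding bary_def
  proof (rule the_equality)
    show "(\<forall>c. c \<notin> C \<longrightarrow> u c = 0) \<and> sum u C = 1 \<and> (\<Sum>c\<in>C. u c *\<^sub>R c) = x"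
      using z s e by blast
  next
    fix u' assume "(\<forall>c. c \<notin> C \<longrightarrow> u' c = 0) \<and> sum u' C = 1 \<and> (\<Sum>c\<in>C. u' c *\<^sub>R c) = x"
    then show "u' = u" using uniq by blast
  qed
qed

lemma bary_hull:
  fixes C :: "'a::euclidean_space set"
  assumes fin: "finite C" and ind: "\<not> affine_dependent C" and x: "x \<in> convex hull C"
  shows "(\<forall>c. c \<notin> C \<longrightarrow> bary C x c = 0) \<and> sum (bary C x) C = 1
     \<and> (\<Sum>c\<in>C. bary C x c *\<^sub>R c) = x \<and> (\<forall>c. 0 \<le> bary C x c)"
proof -
  obtain u where u: "\<forall>c\<in>C. 0 \<le> u c" "sum u C = 1" "(\<Sum>c\<in>C. u c *\<^sub>R c) = x"
    using x convex_hull_finite[OF fin] by auto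
  define u' where "u' = (\<lambda>c. if c \<in> C then u c else 0)"
  have 1: "sum u' C = 1" using u(2) unfolding u'_def by simp
  have 2: "(\<Sum>c\<in>C. u' c *\<^sub>R c) = x" using u(3) unfolding u'_def by simp
  have "bary C x = u'" by (rule bary_unique[OF fin ind _ 1 2]) (simp add: u'_def)
  then show ?thesis using u(1) 1 2 by (simp add: u'_def)
qed

locale LCsetup =
  fixes L :: "'a::euclidean_space set" and I :: "'i set" and Vt :: "'i \<Rightarrow> 'a set"
    and ord :: "'i \<Rightarrow> 'a \<Rightarrow> 'a \<Rightarrow> bool" and \<omega> :: "'a \<Rightarrow> real"
  assumes LC: "Lambda_complex L I Vt ord" and lin: "linear \<omega>"
begin

abbreviation "A \<equiv> A_fun \<omega>"
abbreviation "a \<equiv> a_int \<omega>"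
abbreviation "oA \<equiv> ordA \<omega> ord"

definition Pup :: "'i \<Rightarrow> 'a \<Rightarrow> 'a set" where "Pup \<alpha> v = {u\<in>Vt \<alpha>. oA \<alpha> u v \<or> u = v}"
definition Qlo :: "'i \<Rightarrow> 'a \<Rightarrow> 'a set" where "Qlo \<alpha> v = {u\<in>Vt \<alpha>. oA \<alpha> v u \<or> u = v}"

lemma oc: "\<alpha> \<in> I \<Longrightarrow> finite (Vt \<alpha>) \<and> card (Vt \<alpha>) = DIM('a) + 1 \<and> \<not> affine_dependent (Vt \<alpha>)
            \<and> strict_total_on (Vt \<alpha>) (ord \<alpha>)"
proof -
  assume h: "\<alpha> \<in> I"
  have "ordered_complex I Vt ord" using LC unfolding Lambda_complex_def by blast
  then show ?thesis using h unfolding ordered_complex_def by blast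
qed

lemma finVt: "\<alpha> \<in> I \<Longrightarrow> finite (Vt \<alpha>)" using oc by blast
lemma indVt: "\<alpha> \<in> I \<Longrightarrow> \<not> affine_dependent (Vt \<alpha>)" using oc by blast

lemma A_eq: "A u = \<omega> u + a u" by (simp add: A_fun_def)
lemma A_pos: "0 < A u" and A_le1: "A u \<le> 1"
  unfolding A_fun_def a_int_def by (linarith, linarith)

lemma oA_irrefl: "\<alpha> \<in> I \<Longrightarrow> u \<in> Vt \<alpha> \<Longrightarrow> \<not> oA \<alpha> u u"
  using oc unfolding strict_total_on_def ordA_def by auto

lemma oA_trans: "\<alpha> \<in> I \<Longrightarrow> u \<in> Vt \<alpha> \<Longrightarrow> v \<in> Vt \<alpha> \<Longrightarrow> w \<in> Vt \<alpha> \<Longrightarrow> oA \<alpha> u v \<Longrightarrow> oA \<alpha> v w \<Longrightarrow> oA \<alpha> u w"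
  using oc[of \<alpha>] unfolding strict_total_on_def ordA_def by (smt (verit))

lemma oA_total: "\<alpha> \<in> I \<Longrightarrow> u \<in> Vt \<alpha> \<Longrightarrow> v \<in> Vt \<alpha> \<Longrightarrow> u \<noteq> v \<Longrightarrow> oA \<alpha> u v \<or> oA \<alpha> v u"
  using oc[of \<alpha>] unfolding strict_total_on_def ordA_def by (smt (verit))

lemma oA_asym: "\<alpha> \<in> I \<Longrightarrow> u \<in> Vt \<alpha> \<Longrightarrow> v \<in> Vt \<alpha> \<Longrightarrow> oA \<alpha> u v \<Longrightarrow> \<not> oA \<alpha> v u"
  using oA_trans oA_irrefl by blast

lemma PQ_un: "\<alpha> \<in> I \<Longrightarrow> v \<in> Vt \<alpha> \<Longrightarrow> Pup \<alpha> v \<union> Qlo \<alpha> v = Vt \<alpha>"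
  unfolding Pup_def Qlo_def using oA_total by blast
lemma PQ_int: "\<alpha> \<in> I \<Longrightarrow> v \<in> Vt \<alpha> \<Longrightarrow> Pup \<alpha> v \<inter> Qlo \<alpha> v = {v}"
  unfolding Pup_def Qlo_def using oA_asym by blast

abbreviation "up u l \<equiv> (u, real_of_int (a u + l))"
abbreviation "lo u l \<equiv> (u, real_of_int (a u + l - 1))"

lemma VtY_eq: "VtY \<omega> Vt ord (\<alpha>, v, l) = (\<lambda>u. up u l) ` Pup \<alpha> v \<union> (\<lambda>u. lo u l) ` Qlo \<alpha> v"
  unfolding VtY_def Pup_def Qlo_def by auto

lemma finVtY: "\<alpha> \<in> I \<Longrightarrow> finite (VtY \<omega> Vt ord (\<alpha>, v, l))"
  unfolding VtY_eq Pup_def Qlo_def using finVt by auto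

lemma sumY:
  assumes "\<alpha> \<in> I"
  shows "sum f (VtY \<omega> Vt ord (\<alpha>, v, l)) =
     (\<Sum>u\<in>Vt \<alpha>. (if u \<in> Pup \<alpha> v then f (up u l) else 0) + (if u \<in> Qlo \<alpha> v then f (lo u l) else 0))"
proof -
  have fin: "finite (Vt \<alpha>)" using finVt assms .
  have fP: "finite (Pup \<alpha> v)" "finite (Qlo \<alpha> v)" using fin unfolding Pup_def Qlo_def by auto
  have d: "(\<lambda>u. up u l) ` Pup \<alpha> v \<inter> (\<lambda>u. lo u l) ` Qlo \<alpha> v = {}" by auto
  have "sum f (VtY \<omega> Vt ord (\<alpha>, v, l)) = sum f ((\<lambda>u. up u l) ` Pup \<alpha> v) + sum f ((\<lambda>u. lo u l) ` Qlo \<alpha> v)"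
    unfolding VtY_eq using fP d by (simp add: sum.union_disjoint)
  also have "\<dots> = sum (\<lambda>u. f (up u l)) (Pup \<alpha> v) + sum (\<lambda>u. f (lo u l)) (Qlo \<alpha> v)"
    by (simp add: sum.reindex inj_on_def)
  also have "sum (\<lambda>u. f (up u l)) (Pup \<alpha> v) = (\<Sum>u\<in>Vt \<alpha>. (if u \<in> Pup \<alpha> v then f (up u l) else 0))"
  proof -
    have e: "Vt \<alpha> \<inter> {u. u \<in> Pup \<alpha> v} = Pup \<alpha> v" "Vt \<alpha> \<inter> Pup \<alpha> v = Pup \<alpha> v" by (auto simp: Pup_def)
    show ?thesis by (simp add: sum.If_cases[OF fin] e)
  qed
  also have "sum (\<lambda>u. f (lo u l)) (Qlo \<alpha> v) = (\<Sum>u\<in>Vt \<alpha>. (if u \<in> Qlo \<alpha> v then f (lo u l) else 0))"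
  proof -
    have e: "Vt \<alpha> \<inter> {u. u \<in> Qlo \<alpha> v} = Qlo \<alpha> v" "Vt \<alpha> \<inter> Qlo \<alpha> v = Qlo \<alpha> v" by (auto simp: Qlo_def)
    show ?thesis by (simp add: sum.If_cases[OF fin] e)
  qed
  finally show ?thesis by (simp add: sum.distrib)
qed

end

context LCsetup begin

lemma inP_lt: "\<alpha> \<in> I \<Longrightarrow> u \<in> Vt \<alpha> \<Longrightarrow> v \<in> Vt \<alpha> \<Longrightarrow> oA \<alpha> u v \<Longrightarrow> u \<in> Pup \<alpha> v \<and> u \<notin> Qlo \<alpha> v"
  unfolding Pup_def Qlo_def using oA_asym oA_irrefl by blast
lemma inQ_gt: "\<alpha> \<in> I \<Longrightarrow> u \<in> Vt \<alpha> \<Longrightarrow> v \<in> Vt \<alpha> \<Longrightarrow> oA \<alpha> v u \<Longrightarrow> u \<notin> Pup \<alpha> v \<and> u \<in> Qlo \<alpha> v"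
  unfolding Pup_def Qlo_def using oA_asym oA_irrefl by blast
lemma v_PQ: "v \<in> Vt \<alpha> \<Longrightarrow> v \<in> Pup \<alpha> v \<and> v \<in> Qlo \<alpha> v"
  unfolding Pup_def Qlo_def by blast

definition lamOf :: "('a \<times> real \<Rightarrow> real) \<Rightarrow> 'i \<Rightarrow> 'a \<Rightarrow> int \<Rightarrow> 'a \<Rightarrow> real" where
  "lamOf U \<alpha> v l u = (if u \<in> Pup \<alpha> v then U (up u l) else 0) + (if u \<in> Qlo \<alpha> v then U (lo u l) else 0)"

lemma lamOf_out: "u \<notin> Vt \<alpha> \<Longrightarrow> lamOf U \<alpha> v l u = 0"
  unfolding lamOf_def Pup_def Qlo_def by simp

lemma sum_lamOf: "\<alpha> \<in> I \<Longrightarrow> sum U (VtY \<omega> Vt ord (\<alpha>, v, l)) = sum (lamOf U \<alpha> v l) (Vt \<alpha>)"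
  unfolding sumY lamOf_def by simp

lemma fst_lamOf: "\<alpha> \<in> I \<Longrightarrow> fst (\<Sum>\<rho>\<in>VtY \<omega> Vt ord (\<alpha>, v, l). U \<rho> *\<^sub>R \<rho>) = (\<Sum>u\<in>Vt \<alpha>. lamOf U \<alpha> v l u *\<^sub>R u)"
  unfolding fst_sum sumY lamOf_def by (intro sum.cong refl) (simp add: scaleR_add_left)

lemma snd_lamOf: "\<alpha> \<in> I \<Longrightarrow> snd (\<Sum>\<rho>\<in>VtY \<omega> Vt ord (\<alpha>, v, l). U \<rho> *\<^sub>R \<rho>) =
   (\<Sum>u\<in>Vt \<alpha>. (if u \<in> Pup \<alpha> v then U (up u l) * (a u + l) else 0) + (if u \<in> Qlo \<alpha> v then U (lo u l) * (a u + l - 1) else 0))"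
  unfolding snd_sum sumY by (intro sum.cong refl) auto

lemma lamOf_lt: "\<alpha> \<in> I \<Longrightarrow> u \<in> Vt \<alpha> \<Longrightarrow> v \<in> Vt \<alpha> \<Longrightarrow> oA \<alpha> u v \<Longrightarrow> lamOf U \<alpha> v l u = U (up u l)"
  using inP_lt unfolding lamOf_def by simp
lemma lamOf_gt: "\<alpha> \<in> I \<Longrightarrow> u \<in> Vt \<alpha> \<Longrightarrow> v \<in> Vt \<alpha> \<Longrightarrow> oA \<alpha> v u \<Longrightarrow> lamOf U \<alpha> v l u = U (lo u l)"
  using inQ_gt unfolding lamOf_def by simp
lemma lamOf_v: "v \<in> Vt \<alpha> \<Longrightarrow> lamOf U \<alpha> v l v = U (up v l) + U (lo v l)"
  using v_PQ unfolding lamOf_def by simp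

lemma indVtY:
  assumes al: "\<alpha> \<in> I" and v: "v \<in> Vt \<alpha>"
  shows "\<not> affine_dependent (VtY \<omega> Vt ord (\<alpha>, v, l))"
proof
  let ?S = "VtY \<omega> Vt ord (\<alpha>, v, l)"
  assume "affine_dependent ?S"
  then obtain U where U: "sum U ?S = 0" "\<exists>\<rho>\<in>?S. U \<rho> \<noteq> 0" "(\<Sum>\<rho>\<in>?S. U \<rho> *\<^sub>R \<rho>) = 0"
    using affine_dependent_explicit_finite[OF finVtY[OF al]] by blast
  have s0: "sum (lamOf U \<alpha> v l) (Vt \<alpha>) = 0" using U(1) sum_lamOf[OF al] by simp
  have v0: "(\<Sum>u\<in>Vt \<alpha>. lamOf U \<alpha> v l u *\<^sub>R u) = 0" using U(3) fst_lamOf[OF al, where U=U and v=v and l=l] by simp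
  have z: "\<forall>u\<in>Vt \<alpha>. lamOf U \<alpha> v l u = 0"
    using indVt[OF al] affine_dependent_explicit_finite[OF finVt[OF al]] s0 v0 by blast
  have zu: "(u \<in> Pup \<alpha> v \<longrightarrow> U (up u l) = 0) \<and> (u \<in> Qlo \<alpha> v \<longrightarrow> U (lo u l) = 0)" if "u \<in> Vt \<alpha>" "u \<noteq> v" for u
  proof -
    have "oA \<alpha> u v \<or> oA \<alpha> v u" using oA_total al v that by blast
    then show ?thesis
    proof
      assume h: "oA \<alpha> u v"
      have "U (up u l) = lamOf U \<alpha> v l u" using lamOf_lt[OF al that(1) v h] by metis
      also have "\<dots> = 0" using z that(1) by blast
      finally show ?thesis using inP_lt[OF al that(1) v h] by simp
    next
      assume h: "oA \<alpha> v u"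
      have "U (lo u l) = lamOf U \<alpha> v l u" using lamOf_gt[OF al that(1) v h] by metis
      also have "\<dots> = 0" using z that(1) by blast
      finally show ?thesis using inQ_gt[OF al that(1) v h] by simp
    qed
  qed
  let ?g = "\<lambda>u. (if u \<in> Pup \<alpha> v then U (up u l) * (a u + l) else 0) + (if u \<in> Qlo \<alpha> v then U (lo u l) * (a u + l - 1) else 0)"
  have "0 = snd (\<Sum>\<rho>\<in>?S. U \<rho> *\<^sub>R \<rho>)" using U(3) by simp
  also have "\<dots> = sum ?g (Vt \<alpha>)" by (rule snd_lamOf[OF al])
  also have "\<dots> = ?g v + sum ?g (Vt \<alpha> - {v})" by (rule sum.remove[OF finVt[OF al] v])
  also have "sum ?g (Vt \<alpha> - {v}) = 0"
  proof (rule sum.neutral, rule ballI)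
    fix u assume "u \<in> Vt \<alpha> - {v}"
    then show "?g u = 0" using zu by simp
  qed
  finally have g0: "?g v = 0" by simp
  have sv: "U (up v l) + U (lo v l) = 0" using z v lamOf_v by metis
  have "?g v = U (up v l) * (a v + l) + U (lo v l) * (a v + l - 1)" using v_PQ[OF v] by simp
  also have "\<dots> = U (up v l) + (U (up v l) + U (lo v l)) * (a v + l - 1)" by (simp add: algebra_simps)
  finally have "U (up v l) = 0" using g0 sv by simp
  then have zv: "U (up v l) = 0 \<and> U (lo v l) = 0" using sv by simp
  obtain \<rho> where \<rho>: "\<rho> \<in> ?S" "U \<rho> \<noteq> 0" using U(2) by blast
  then show False using zu zv unfolding VtY_eq Pup_def Qlo_def by (cases "fst \<rho> = v") auto
qed

lemma cardVtY:
  assumes al: "\<alpha> \<in> I" and v: "v \<in> Vt \<alpha>"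
  shows "card (VtY \<omega> Vt ord (\<alpha>, v, l)) = DIM('a \<times> real) + 1"
proof -
  have fin: "finite (Vt \<alpha>)" using finVt al .
  have fP: "finite (Pup \<alpha> v)" "finite (Qlo \<alpha> v)" using fin unfolding Pup_def Qlo_def by auto
  have d: "(\<lambda>u. up u l) ` Pup \<alpha> v \<inter> (\<lambda>u. lo u l) ` Qlo \<alpha> v = {}" by auto
  have "card (VtY \<omega> Vt ord (\<alpha>, v, l)) = card ((\<lambda>u. up u l) ` Pup \<alpha> v) + card ((\<lambda>u. lo u l) ` Qlo \<alpha> v)"
    unfolding VtY_eq using fP d by (simp add: card_Un_disjoint)
  also have "\<dots> = card (Pup \<alpha> v) + card (Qlo \<alpha> v)" by (simp add: card_image inj_on_def)
  also have "\<dots> = card (Pup \<alpha> v \<union> Qlo \<alpha> v) + card (Pup \<alpha> v \<inter> Qlo \<alpha> v)"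
    using card_Un_Int[OF fP] by simp
  also have "\<dots> = card (Vt \<alpha>) + 1" using PQ_un[OF al v] PQ_int[OF al v] by simp
  finally show ?thesis using oc[OF al] by simp
qed

lemma ordY_total:
  assumes al: "\<alpha> \<in> I" and v: "v \<in> Vt \<alpha>"
  shows "strict_total_on (VtY \<omega> Vt ord (\<alpha>, v, l)) (ordY ord (\<alpha>, v, l))"
proof -
  have st: "strict_total_on (Vt \<alpha>) (ord \<alpha>)" using oc[OF al] by blast
  have irr: "\<And>x. x \<in> Vt \<alpha> \<Longrightarrow> \<not> ord \<alpha> x x"
    and tr: "\<And>x y z. x \<in> Vt \<alpha> \<Longrightarrow> y \<in> Vt \<alpha> \<Longrightarrow> z \<in> Vt \<alpha> \<Longrightarrow> ord \<alpha> x y \<Longrightarrow> ord \<alpha> y z \<Longrightarrow> ord \<alpha> x z"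
    and to: "\<And>x y. x \<in> Vt \<alpha> \<Longrightarrow> y \<in> Vt \<alpha> \<Longrightarrow> x \<noteq> y \<Longrightarrow> ord \<alpha> x y \<or> ord \<alpha> y x"
    using st unfolding strict_total_on_def by blast+
  have fs: "fst \<rho> \<in> Vt \<alpha>" if "\<rho> \<in> VtY \<omega> Vt ord (\<alpha>, v, l)" for \<rho>
    using that unfolding VtY_eq Pup_def Qlo_def by auto
  have oy: "ordY ord (\<alpha>, v, l) x y \<longleftrightarrow> ord \<alpha> (fst x) (fst y) \<or> fst x = fst y \<and> snd y < snd x" for x y
    unfolding ordY_def by simp
  show ?thesis unfolding strict_total_on_def oy
  proof (intro conjI ballI impI)
    fix x assume "x \<in> VtY \<omega> Vt ord (\<alpha>, v, l)"
    then show "\<not> (ord \<alpha> (fst x) (fst x) \<or> fst x = fst x \<and> snd x < snd x)"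
      using irr fs by auto
  next
    fix x y z assume xyz: "x \<in> VtY \<omega> Vt ord (\<alpha>, v, l)" "y \<in> VtY \<omega> Vt ord (\<alpha>, v, l)" "z \<in> VtY \<omega> Vt ord (\<alpha>, v, l)"
      and h1: "ord \<alpha> (fst x) (fst y) \<or> fst x = fst y \<and> snd y < snd x"
      and h2: "ord \<alpha> (fst y) (fst z) \<or> fst y = fst z \<and> snd z < snd y"
    show "ord \<alpha> (fst x) (fst z) \<or> fst x = fst z \<and> snd z < snd x"
    proof (cases "fst x = fst y")
      case True
      then show ?thesis using h1 h2 irr fs xyz by auto
    next
      case False
      then have o1: "ord \<alpha> (fst x) (fst y)" using h1 by blast
      show ?thesis
      proof (cases "fst y = fst z")
        case True then show ?thesis using o1 by simp
      next
        case False
        then have "ord \<alpha> (fst y) (fst z)" using h2 by blast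
        then show ?thesis using tr[OF fs[OF xyz(1)] fs[OF xyz(2)] fs[OF xyz(3)] o1] by blast
      qed
    qed
  next
    fix x y assume xy: "x \<in> VtY \<omega> Vt ord (\<alpha>, v, l)" "y \<in> VtY \<omega> Vt ord (\<alpha>, v, l)" "x \<noteq> y"
    show "(ord \<alpha> (fst x) (fst y) \<or> fst x = fst y \<and> snd y < snd x) \<or>
           (ord \<alpha> (fst y) (fst x) \<or> fst y = fst x \<and> snd x < snd y)"
    proof (cases "fst x = fst y")
      case True
      then have "snd x \<noteq> snd y" using xy(3) by (simp add: prod_eq_iff)
      then have "snd y < snd x \<or> snd x < snd y" by linarith
      then show ?thesis using True by auto
    next
      case False then show ?thesis using to fs xy by blast
    qed
  qed
qed

end

context LCsetup begin

lemma om_comb: "\<omega> (\<Sum>u\<in>S. c u *\<^sub>R u) = (\<Sum>u\<in>S. c u * \<omega> u)"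
  by (simp add: linear_sum[OF lin] linear_scale[OF lin])

lemma om_add: "\<omega> (x + y) = \<omega> x + \<omega> y" using linear_add[OF lin] .

definition Cl :: "('a \<Rightarrow> real) \<Rightarrow> 'i \<Rightarrow> 'a \<Rightarrow> real" where
  "Cl lam \<alpha> u = (\<Sum>w\<in>{w\<in>Vt \<alpha>. oA \<alpha> w u}. lam w)"

definition Om :: "'a \<times> real \<Rightarrow> real" where "Om z = \<omega> (fst z) + snd z"

definition tau :: "'i \<Rightarrow> 'a \<times> real \<Rightarrow> real" where
  "tau \<alpha> z = Om z - (\<Sum>u\<in>Vt \<alpha>. bary (Vt \<alpha>) (fst z) u * A u)"

definition clampG :: "real \<Rightarrow> real \<Rightarrow> real" where "clampG lam r = max 0 (min r lam)"

definition canon :: "'i \<Rightarrow> 'a \<times> real \<Rightarrow> 'a \<times> real \<Rightarrow> real" where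
  "canon \<alpha> z \<rho> = (if snd \<rho> - a (fst \<rho>) \<in> \<int> then
      clampG (bary (Vt \<alpha>) (fst z) (fst \<rho>)) (tau \<alpha> z - (snd \<rho> - a (fst \<rho>)) + 1 - Cl (bary (Vt \<alpha>) (fst z)) \<alpha> (fst \<rho>))
    - clampG (bary (Vt \<alpha>) (fst z) (fst \<rho>)) (tau \<alpha> z - (snd \<rho> - a (fst \<rho>)) - Cl (bary (Vt \<alpha>) (fst z)) \<alpha> (fst \<rho>))
    else 0)"

lemma clamp0: "r \<le> 0 \<Longrightarrow> 0 \<le> lam \<Longrightarrow> clampG lam r = 0" unfolding clampG_def by simp
lemma clampL: "lam \<le> r \<Longrightarrow> 0 \<le> lam \<Longrightarrow> clampG lam r = lam" unfolding clampG_def by simp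
lemma clampM: "0 \<le> r \<Longrightarrow> r \<le> lam \<Longrightarrow> clampG lam r = r" unfolding clampG_def by simp
lemma clampZ: "clampG 0 r = 0" unfolding clampG_def by simp

lemma Cl_nonneg: "(\<forall>w\<in>Vt \<alpha>. 0 \<le> lam w) \<Longrightarrow> 0 \<le> Cl lam \<alpha> u"
  unfolding Cl_def by (rule sum_nonneg) auto

lemma Cl_le1:
  assumes al: "\<alpha> \<in> I" and u: "u \<in> Vt \<alpha>" and nn: "\<forall>w\<in>Vt \<alpha>. 0 \<le> lam w" and s: "sum lam (Vt \<alpha>) = 1"
  shows "Cl lam \<alpha> u + lam u \<le> 1"
proof -
  have fin: "finite (Vt \<alpha>)" using finVt[OF al] .
  have d: "u \<notin> {w\<in>Vt \<alpha>. oA \<alpha> w u}" using oA_irrefl[OF al u] by blast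
  have "Cl lam \<alpha> u + lam u = sum lam (insert u {w\<in>Vt \<alpha>. oA \<alpha> w u})"
    unfolding Cl_def using fin d by simp
  also have "\<dots> \<le> sum lam (Vt \<alpha>)" by (rule sum_mono2[OF fin]) (use u nn in auto)
  finally show ?thesis using s by simp
qed

lemma Cl_mono:
  assumes al: "\<alpha> \<in> I" and u: "u \<in> Vt \<alpha>" and v: "v \<in> Vt \<alpha>" and nn: "\<forall>w\<in>Vt \<alpha>. 0 \<le> lam w"
    and uv: "oA \<alpha> u v"
  shows "Cl lam \<alpha> u + lam u \<le> Cl lam \<alpha> v"
proof -
  have fin: "finite (Vt \<alpha>)" using finVt[OF al] .
  have d: "u \<notin> {w\<in>Vt \<alpha>. oA \<alpha> w u}" using oA_irrefl[OF al u] by blast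
  have "Cl lam \<alpha> u + lam u = sum lam (insert u {w\<in>Vt \<alpha>. oA \<alpha> w u})"
    unfolding Cl_def using fin d by simp
  also have "\<dots> \<le> Cl lam \<alpha> v" unfolding Cl_def
    by (rule sum_mono2) (use fin u uv nn oA_trans[OF al _ u v] in auto)
  finally show ?thesis .
qed

lemma ystruct:
  assumes al: "\<alpha> \<in> I" and v: "v \<in> Vt \<alpha>" and z: "z \<in> convex hull (VtY \<omega> Vt ord (\<alpha>, v, l))"
  defines "\<mu> \<equiv> bary (VtY \<omega> Vt ord (\<alpha>, v, l)) z"
  shows "bary (Vt \<alpha>) (fst z) = lamOf \<mu> \<alpha> v l"
    and "tau \<alpha> z = real_of_int l - 1 + Cl (lamOf \<mu> \<alpha> v l) \<alpha> v + \<mu> (up v l)"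
    and "\<forall>c. 0 \<le> \<mu> c" and "\<forall>c. c \<notin> VtY \<omega> Vt ord (\<alpha>, v, l) \<longrightarrow> \<mu> c = 0"
    and "sum \<mu> (VtY \<omega> Vt ord (\<alpha>, v, l)) = 1" and "(\<Sum>c\<in>VtY \<omega> Vt ord (\<alpha>, v, l). \<mu> c *\<^sub>R c) = z"
proof -
  let ?S = "VtY \<omega> Vt ord (\<alpha>, v, l)"
  have bh: "(\<forall>c. c \<notin> ?S \<longrightarrow> \<mu> c = 0) \<and> sum \<mu> ?S = 1 \<and> (\<Sum>c\<in>?S. \<mu> c *\<^sub>R c) = z \<and> (\<forall>c. 0 \<le> \<mu> c)"
    unfolding \<mu>_def by (rule bary_hull[OF finVtY[OF al] indVtY[OF al v] z])
  then show "\<forall>c. 0 \<le> \<mu> c" and "\<forall>c. c \<notin> ?S \<longrightarrow> \<mu> c = 0"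
    and "sum \<mu> ?S = 1" and "(\<Sum>c\<in>?S. \<mu> c *\<^sub>R c) = z" by auto
  let ?lam = "lamOf \<mu> \<alpha> v l"
  have s1: "sum ?lam (Vt \<alpha>) = 1" using bh sum_lamOf[OF al] by metis
  have s2: "(\<Sum>u\<in>Vt \<alpha>. ?lam u *\<^sub>R u) = fst z" using bh fst_lamOf[OF al, where U=\<mu> and v=v and l=l] by simp
  show lamq: "bary (Vt \<alpha>) (fst z) = ?lam"
    by (rule bary_unique[OF finVt[OF al] indVt[OF al] _ s1 s2]) (simp add: lamOf_out)
  have sndz: "snd z = (\<Sum>u\<in>Vt \<alpha>. (if u \<in> Pup \<alpha> v then \<mu> (up u l) * (a u + l) else 0) + (if u \<in> Qlo \<alpha> v then \<mu> (lo u l) * (a u + l - 1) else 0))"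
    using bh snd_lamOf[OF al, where U=\<mu> and v=v and l=l] by simp
  have omz: "\<omega> (fst z) = (\<Sum>u\<in>Vt \<alpha>. ?lam u * \<omega> u)" using s2 om_comb by metis
  have trm: "(\<lambda>u. ?lam u * \<omega> u) u + ((if u \<in> Pup \<alpha> v then \<mu> (up u l) * (a u + l) else 0) + (if u \<in> Qlo \<alpha> v then \<mu> (lo u l) * (a u + l - 1) else 0))
      - ?lam u * A u = (l - 1) * ?lam u + ((if oA \<alpha> u v then ?lam u else 0) + (if u = v then \<mu> (up v l) else 0))"
    if u: "u \<in> Vt \<alpha>" for u
  proof -
    have "u = v \<or> oA \<alpha> u v \<or> oA \<alpha> v u" using oA_total[OF al u v] by blast
    moreover
    { assume "u = v"
      then have ?thesis using v_PQ[OF v] oA_irrefl[OF al v] unfolding lamOf_def A_eq by (simp add: algebra_simps) }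
    moreover
    { assume h: "oA \<alpha> u v"
      then have ?thesis using inP_lt[OF al u v h] oA_irrefl[OF al u] unfolding lamOf_def A_eq by (auto simp add: algebra_simps) }
    moreover
    { assume h: "oA \<alpha> v u"
      then have ?thesis using inQ_gt[OF al u v h] oA_asym[OF al v u h] oA_irrefl[OF al u] unfolding lamOf_def A_eq by (auto simp add: algebra_simps) }
    ultimately show ?thesis by blast
  qed
  have "tau \<alpha> z = (\<Sum>u\<in>Vt \<alpha>. ?lam u * \<omega> u) + snd z - (\<Sum>u\<in>Vt \<alpha>. ?lam u * A u)"
    unfolding tau_def Om_def lamq omz by simp
  also have "\<dots> = (\<Sum>u\<in>Vt \<alpha>. ?lam u * \<omega> u + ((if u \<in> Pup \<alpha> v then \<mu> (up u l) * (a u + l) else 0) + (if u \<in> Qlo \<alpha> v then \<mu> (lo u l) * (a u + l - 1) else 0)) - ?lam u * A u)"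
    unfolding sndz by (simp only: sum.distrib sum_subtractf)
  also have "\<dots> = (\<Sum>u\<in>Vt \<alpha>. (l - 1) * ?lam u + ((if oA \<alpha> u v then ?lam u else 0) + (if u = v then \<mu> (up v l) else 0)))"
    by (rule sum.cong[OF refl]) (rule trm)
  also have "\<dots> = (l - 1) * sum ?lam (Vt \<alpha>) + Cl ?lam \<alpha> v + \<mu> (up v l)"
  proof -
    have e1: "(\<Sum>u\<in>Vt \<alpha>. (if oA \<alpha> u v then ?lam u else 0)) = Cl ?lam \<alpha> v"
      unfolding Cl_def by (simp add: sum.inter_filter[OF finVt[OF al]])
    have e2: "(\<Sum>u\<in>Vt \<alpha>. (if u = v then \<mu> (up v l) else 0)) = \<mu> (up v l)"
      using v finVt[OF al] by simp
    have e3: "(\<Sum>u\<in>Vt \<alpha>. real_of_int (l - 1) * ?lam u) = real_of_int (l - 1) * sum ?lam (Vt \<alpha>)"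
      by (simp add: sum_distrib_left)
    show ?thesis by (simp only: sum.distrib e1 e2 e3 add.assoc)
  qed
  finally have X: "tau \<alpha> z = real_of_int (l - 1) * 1 + Cl ?lam \<alpha> v + \<mu> (up v l)" using s1 by simp
  then show "tau \<alpha> z = real_of_int l - 1 + Cl (lamOf \<mu> \<alpha> v l) \<alpha> v + \<mu> (up v l)" by simp
qed

end

context LCsetup begin

lemma key_arith:
  fixes lam t C r :: real and d :: int
  assumes l0: "0 \<le> lam" and r: "r = t - d - C"
  shows keyA: "C + lam \<le> t \<Longrightarrow> t - C \<le> 1 \<Longrightarrow> clampG lam r - clampG lam (r - 1) = (if d = 0 then lam else 0)"
    and keyB: "0 \<le> t - C \<Longrightarrow> t - C \<le> lam \<Longrightarrow> lam \<le> 1 \<Longrightarrow>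
       clampG lam r - clampG lam (r - 1) = (if d = 0 then t - C else if d = -1 then lam - (t - C) else 0)"
    and keyC: "t \<le> C \<Longrightarrow> C + lam \<le> 1 + t \<Longrightarrow> clampG lam r - clampG lam (r - 1) = (if d = -1 then lam else 0)"
proof -
  have dc: "d \<ge> 1 \<or> d = 0 \<or> d = -1 \<or> d \<le> -2" by linarith
  have dr: "d \<ge> 1 \<Longrightarrow> real_of_int d \<ge> 1" "d \<le> -2 \<Longrightarrow> real_of_int d \<le> -2" by simp_all
  show "C + lam \<le> t \<Longrightarrow> t - C \<le> 1 \<Longrightarrow> clampG lam r - clampG lam (r - 1) = (if d = 0 then lam else 0)"
    using dc dr l0 r unfolding clampG_def by auto
  show "0 \<le> t - C \<Longrightarrow> t - C \<le> lam \<Longrightarrow> lam \<le> 1 \<Longrightarrow>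
       clampG lam r - clampG lam (r - 1) = (if d = 0 then t - C else if d = -1 then lam - (t - C) else 0)"
    using dc dr l0 r unfolding clampG_def by auto
  show "t \<le> C \<Longrightarrow> C + lam \<le> 1 + t \<Longrightarrow> clampG lam r - clampG lam (r - 1) = (if d = -1 then lam else 0)"
    using dc dr l0 r unfolding clampG_def by auto
qed

lemma memY: "(u, n) \<in> VtY \<omega> Vt ord (\<alpha>, v, l) \<longleftrightarrow>
   (u \<in> Pup \<alpha> v \<and> n = a u + l) \<or> (u \<in> Qlo \<alpha> v \<and> n = a u + l - 1)"
  unfolding VtY_eq by auto

lemma canon_eq:
  assumes al: "\<alpha> \<in> I" and v: "v \<in> Vt \<alpha>" and z: "z \<in> convex hull (VtY \<omega> Vt ord (\<alpha>, v, l))"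
  shows "bary (VtY \<omega> Vt ord (\<alpha>, v, l)) z \<rho> = canon \<alpha> z \<rho>"
proof -
  define \<mu> where "\<mu> = bary (VtY \<omega> Vt ord (\<alpha>, v, l)) z"
  note S = ystruct[OF al v z, folded \<mu>_def]
  define lam where "lam = lamOf \<mu> \<alpha> v l"
  define \<theta> where "\<theta> = \<mu> (up v l)"
  define t where "t = Cl lam \<alpha> v + \<theta>"
  have bz: "bary (Vt \<alpha>) (fst z) = lam" using S(1) lam_def by simp
  have tz: "tau \<alpha> z = real_of_int l - 1 + t" using S(2) lam_def \<theta>_def t_def by simp
  have lnn: "\<forall>w. 0 \<le> lam w" using S(3) unfolding lam_def lamOf_def by simp
  have ls: "sum lam (Vt \<alpha>) = 1" using S(5) sum_lamOf[OF al] lam_def by metis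
  have lv: "lam v = \<theta> + \<mu> (lo v l)" using lamOf_v[OF v] lam_def \<theta>_def by simp
  have th0: "0 \<le> \<theta>" "\<theta> \<le> lam v" using S(3) lv \<theta>_def by (simp, metis le_add_same_cancel1)
  have Cv: "0 \<le> Cl lam \<alpha> v" "Cl lam \<alpha> v + lam v \<le> 1"
    using Cl_nonneg Cl_le1[OF al v] lnn ls by auto
  have Z: "\<rho> \<notin> VtY \<omega> Vt ord (\<alpha>, v, l) \<Longrightarrow> \<mu> \<rho> = 0" using S(4) by blast
  obtain u n where \<rho>: "\<rho> = (u, n)" by (cases \<rho>)
  show ?thesis
  proof (cases "n - a u \<in> \<int>")
    case False
    then have "\<rho> \<notin> VtY \<omega> Vt ord (\<alpha>, v, l)" unfolding \<rho> memY by auto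
    then show ?thesis using S(4) False unfolding \<mu>_def[symmetric] canon_def \<rho> by simp
  next
    case True
    then obtain m :: int where m: "n - a u = m" by (metis Ints_cases)
    have nm: "n = a u + m" using m by simp
    define C where "C = Cl lam \<alpha> u"
    define r where "r = t - real_of_int (m - l) - C"
    have can: "canon \<alpha> z \<rho> = clampG (lam u) r - clampG (lam u) (r - 1)"
    proof -
      have e1: "tau \<alpha> z - (n - a u) + 1 - Cl lam \<alpha> u = r"
        unfolding r_def C_def tz m by simp
      have e2: "tau \<alpha> z - (n - a u) - Cl lam \<alpha> u = r - 1"
        unfolding r_def C_def tz m by simp
      show ?thesis unfolding canon_def \<rho> fst_conv snd_conv if_P[OF True] bz e1 e2 ..
    qed
    show ?thesis
    proof (cases "u \<in> Vt \<alpha>")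
      case False
      then have "\<rho> \<notin> VtY \<omega> Vt ord (\<alpha>, v, l)" unfolding \<rho> memY Pup_def Qlo_def by auto
      moreover have "lam u = 0" using False lamOf_out lam_def by simp
      ultimately show ?thesis using S(4) can unfolding \<mu>_def[symmetric] by (simp add: clampZ del: prod.collapse) (metis prod.collapse)
    next
      case u: True
      have Cu: "0 \<le> C" "C + lam u \<le> 1" using Cl_nonneg Cl_le1[OF al u] lnn ls C_def by auto
      have "u = v \<or> oA \<alpha> u v \<or> oA \<alpha> v u" using oA_total[OF al u v] by blast
      moreover
      { assume h: "oA \<alpha> u v"
        have CC: "C + lam u \<le> Cl lam \<alpha> v" using Cl_mono[OF al u v _ h] lnn C_def by simp
        have c: "canon \<alpha> z \<rho> = (if m - l = 0 then lam u else 0)"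
          unfolding can by (rule keyA[where t=t and C=C and d="m-l"]) (use lnn r_def CC th0 Cv Cu t_def in auto)
        have "\<mu> \<rho> = (if m - l = 0 then lam u else 0)"
        proof (cases "m - l = 0")
          case True
          then show ?thesis using lamOf_lt[OF al u v h] lam_def \<rho> nm by simp
        next
          case False
          then have "\<rho> \<notin> VtY \<omega> Vt ord (\<alpha>, v, l)" unfolding \<rho> memY nm using inP_lt[OF al u v h] by auto
          then show ?thesis using Z False by simp
        qed
        then have ?thesis using c \<mu>_def by simp }
      moreover
      { assume h: "oA \<alpha> v u"
        have CC: "Cl lam \<alpha> v + lam v \<le> C" using Cl_mono[OF al v u _ h] lnn C_def by simp
        have c: "canon \<alpha> z \<rho> = (if m - l = -1 then lam u else 0)"
          unfolding can by (rule keyC[where t=t and C=C and d="m-l"]) (use lnn r_def CC th0 Cv Cu t_def in auto)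
        have "\<mu> \<rho> = (if m - l = -1 then lam u else 0)"
        proof (cases "m - l = -1")
          case True
          then have "n = a u + l - 1" using nm by simp
          then show ?thesis using lamOf_gt[OF al u v h] lam_def \<rho> True by simp
        next
          case False
          then have "\<rho> \<notin> VtY \<omega> Vt ord (\<alpha>, v, l)" unfolding \<rho> memY nm using inQ_gt[OF al u v h] by auto
          then show ?thesis using Z False by simp
        qed
        then have ?thesis using c \<mu>_def by simp }
      moreover
      { assume h: "u = v"
        have c: "canon \<alpha> z \<rho> = (if m - l = 0 then t - C else if m - l = -1 then lam u - (t - C) else 0)"
          unfolding can by (rule keyB[where t=t and C=C and d="m-l"]) (use lnn r_def th0 Cv Cu t_def h C_def in auto)
        have tC: "t - C = \<theta>" using h C_def t_def by simp
        have "\<mu> \<rho> = (if m - l = 0 then \<theta> else if m - l = -1 then lam u - \<theta> else 0)"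
        proof -
          have "m - l = 0 \<or> m - l = -1 \<or> (m - l \<noteq> 0 \<and> m - l \<noteq> -1)" by blast
          moreover
          { assume "m - l = 0" then have ?thesis using \<theta>_def \<rho> nm h by simp }
          moreover
          { assume e: "m - l = -1" then have "n = a u + l - 1" using nm by simp
            then have ?thesis using e lv \<rho> h by simp }
          moreover
          { assume e: "m - l \<noteq> 0 \<and> m - l \<noteq> -1"
            then have "\<rho> \<notin> VtY \<omega> Vt ord (\<alpha>, v, l)" unfolding \<rho> memY nm by auto
            then have ?thesis using Z e by simp }
          ultimately show ?thesis by blast
        qed
        then have ?thesis using c tC \<mu>_def by simp }
      ultimately show ?thesis by blast
    qed
  qed
qed

end

context LCsetup begin

lemma LC_i: "\<alpha> \<in> I \<Longrightarrow> \<beta> \<in> I \<Longrightarrow> convex hull (Vt \<alpha>) \<inter> convex hull (Vt \<beta>) = {} \<or>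
         convex hull (Vt \<alpha>) \<inter> convex hull (Vt \<beta>) = convex hull (Vt \<alpha> \<inter> Vt \<beta>)"
  using conjunct1[OF conjunct2[OF LC[unfolded Lambda_complex_def]]] by blast
lemma LC_ii: "\<alpha> \<in> I \<Longrightarrow> \<beta> \<in> I \<Longrightarrow> v \<in> Vt \<alpha> \<inter> Vt \<beta> \<Longrightarrow> w \<in> Vt \<alpha> \<inter> Vt \<beta> \<Longrightarrow> ord \<alpha> v w \<longleftrightarrow> ord \<beta> v w"
  using conjunct1[OF conjunct2[OF conjunct2[OF LC[unfolded Lambda_complex_def]]]] by blast
lemma LC_iii: "\<alpha> \<in> I \<Longrightarrow> \<alpha>' \<in> I \<Longrightarrow> v \<in> Vt \<alpha> \<Longrightarrow> w \<in> Vt \<alpha> \<Longrightarrow> t \<in> L \<Longrightarrow>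
         v + t \<in> Vt \<alpha>' \<Longrightarrow> w + t \<in> Vt \<alpha>' \<Longrightarrow> (ord \<alpha> v w \<longleftrightarrow> ord \<alpha>' (v + t) (w + t))"
  using conjunct1[OF conjunct2[OF conjunct2[OF conjunct2[OF LC[unfolded Lambda_complex_def]]]]] by blast
lemma LC_iv1: "\<exists>x\<in>(\<Union>\<alpha>\<in>I. convex hull (Vt \<alpha>)). y - x \<in> L"
  using conjunct1[OF conjunct2[OF conjunct2[OF conjunct2[OF conjunct2[OF LC[unfolded Lambda_complex_def]]]]]] by blast
lemma LC_iv2: "x \<in> interior (convex hull (Vt \<alpha>)) \<Longrightarrow> \<alpha> \<in> I \<Longrightarrow> x' \<in> interior (convex hull (Vt \<alpha>')) \<Longrightarrow> \<alpha>' \<in> I \<Longrightarrow>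
         x - x' \<in> L \<Longrightarrow> x = x'"
  using conjunct1[OF conjunct2[OF conjunct2[OF conjunct2[OF conjunct2[OF conjunct2[OF LC[unfolded Lambda_complex_def]]]]]]] by blast
lemma LC_v: "\<alpha> \<in> I \<Longrightarrow> \<alpha>' \<in> I \<Longrightarrow> x \<in> convex hull (Vt \<alpha>) \<Longrightarrow> t \<in> L \<Longrightarrow> x + t \<in> convex hull (Vt \<alpha>') \<Longrightarrow>
         SpVt (Vt \<alpha>') (x + t) = (\<lambda>v. v + t) ` SpVt (Vt \<alpha>) x"
  using conjunct2[OF conjunct2[OF conjunct2[OF conjunct2[OF conjunct2[OF conjunct2[OF LC[unfolded Lambda_complex_def]]]]]]] by blast

lemma bhX:
  assumes "\<alpha> \<in> I" "x \<in> convex hull (Vt \<alpha>)"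
  shows "(\<forall>c. c \<notin> Vt \<alpha> \<longrightarrow> bary (Vt \<alpha>) x c = 0) \<and> sum (bary (Vt \<alpha>) x) (Vt \<alpha>) = 1
     \<and> (\<Sum>c\<in>Vt \<alpha>. bary (Vt \<alpha>) x c *\<^sub>R c) = x \<and> (\<forall>c. 0 \<le> bary (Vt \<alpha>) x c)"
  by (rule bary_hull[OF finVt[OF assms(1)] indVt[OF assms(1)] assms(2)])

lemma bary_sub:
  assumes al: "\<alpha> \<in> I" and K: "K \<subseteq> Vt \<alpha>" and x: "x \<in> convex hull K"
  shows "bary (Vt \<alpha>) x = bary K x"
proof -
  have fK: "finite K" using finite_subset[OF K finVt[OF al]] .
  have iK: "\<not> affine_dependent K" using affine_independent_subset[OF indVt[OF al] K] .
  note h = bary_hull[OF fK iK x]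
  show ?thesis
  proof (rule bary_unique[OF finVt[OF al] indVt[OF al]])
    show "\<forall>c. c \<notin> Vt \<alpha> \<longrightarrow> bary K x c = 0" using h K by blast
    have "sum (bary K x) (Vt \<alpha>) = sum (bary K x) K"
      by (rule sum.mono_neutral_right[OF finVt[OF al] K]) (use h in blast)
    then show "sum (bary K x) (Vt \<alpha>) = 1" using h by simp
    have "(\<Sum>c\<in>Vt \<alpha>. bary K x c *\<^sub>R c) = (\<Sum>c\<in>K. bary K x c *\<^sub>R c)"
      by (rule sum.mono_neutral_right[OF finVt[OF al] K]) (use h in auto)
    then show "(\<Sum>c\<in>Vt \<alpha>. bary K x c *\<^sub>R c) = x" using h by simp
  qed
qed

lemma bary_agree:
  assumes al: "\<alpha> \<in> I" and be: "\<beta> \<in> I" and xa: "x \<in> convex hull (Vt \<alpha>)" and xb: "x \<in> convex hull (Vt \<beta>)"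
  shows "bary (Vt \<alpha>) x = bary (Vt \<beta>) x"
proof -
  have "x \<in> convex hull (Vt \<alpha> \<inter> Vt \<beta>)" using LC_i[OF al be] xa xb by blast
  then show ?thesis using bary_sub[OF al, of "Vt \<alpha> \<inter> Vt \<beta>"] bary_sub[OF be, of "Vt \<alpha> \<inter> Vt \<beta>"] by auto
qed

lemma sum_agree:
  assumes al: "\<alpha> \<in> I" and be: "\<beta> \<in> I" and za: "\<forall>c. c \<notin> Vt \<alpha> \<longrightarrow> f c = 0" and zb: "\<forall>c. c \<notin> Vt \<beta> \<longrightarrow> f c = 0"
  shows "sum f (Vt \<alpha>) = sum f (Vt \<beta>)"
proof -
  have "sum f (Vt \<alpha>) = sum f (Vt \<alpha> \<inter> Vt \<beta>)"
    by (rule sum.mono_neutral_right[OF finVt[OF al]]) (use zb in auto)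
  also have "\<dots> = sum f (Vt \<beta>)"
    by (rule sum.mono_neutral_left[OF finVt[OF be]]) (use za in auto)
  finally show ?thesis .
qed

lemma oA_agree: "\<alpha> \<in> I \<Longrightarrow> \<beta> \<in> I \<Longrightarrow> v \<in> Vt \<alpha> \<inter> Vt \<beta> \<Longrightarrow> w \<in> Vt \<alpha> \<inter> Vt \<beta> \<Longrightarrow> oA \<alpha> v w \<longleftrightarrow> oA \<beta> v w"
  unfolding ordA_def using LC_ii by blast

lemma canon_agree:
  assumes al: "\<alpha> \<in> I" and be: "\<beta> \<in> I" and xa: "fst z \<in> convex hull (Vt \<alpha>)" and xb: "fst z \<in> convex hull (Vt \<beta>)"
  shows "canon \<alpha> z = canon \<beta> z"
proof
  fix \<rho>
  define lam where "lam = bary (Vt \<alpha>) (fst z)"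
  have lb: "bary (Vt \<beta>) (fst z) = lam" using bary_agree[OF al be xa xb] lam_def by simp
  have za: "\<forall>c. c \<notin> Vt \<alpha> \<longrightarrow> lam c = 0" using bhX[OF al xa] lam_def by blast
  have zb: "\<forall>c. c \<notin> Vt \<beta> \<longrightarrow> lam c = 0" using bhX[OF be xb] lb by blast
  have tau_eq: "tau \<alpha> z = tau \<beta> z"
    unfolding tau_def lb lam_def[symmetric] using sum_agree[OF al be, of "\<lambda>u. lam u * A u"] za zb by simp
  have Cl_eq: "Cl lam \<alpha> u = Cl lam \<beta> u" if "lam u \<noteq> 0" for u
  proof -
    have u: "u \<in> Vt \<alpha>" "u \<in> Vt \<beta>" using that za zb by auto
    have "Cl lam \<alpha> u = (\<Sum>w\<in>Vt \<alpha>. if oA \<alpha> w u then lam w else 0)"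
      unfolding Cl_def by (simp add: sum.inter_filter[OF finVt[OF al]])
    also have "\<dots> = (\<Sum>w\<in>Vt \<beta>. if oA \<alpha> w u then lam w else 0)"
      by (rule sum_agree[OF al be]) (use za zb in auto)
    also have "\<dots> = (\<Sum>w\<in>Vt \<beta>. if oA \<beta> w u then lam w else 0)"
    proof (rule sum.cong[OF refl])
      fix w assume w: "w \<in> Vt \<beta>"
      show "(if oA \<alpha> w u then lam w else 0) = (if oA \<beta> w u then lam w else 0)"
      proof (cases "w \<in> Vt \<alpha>")
        case True then show ?thesis using oA_agree[OF al be, of w u] u w by simp
      next
        case False then show ?thesis using za by simp
      qed
    qed
    also have "\<dots> = Cl lam \<beta> u"
      unfolding Cl_def by (simp add: sum.inter_filter[OF finVt[OF be]])
    finally show ?thesis .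
  qed
  show "canon \<alpha> z \<rho> = canon \<beta> z \<rho>"
  proof (cases "lam (fst \<rho>) = 0")
    case True then show ?thesis unfolding canon_def lb lam_def[symmetric] by (simp add: clampZ)
  next
    case False then show ?thesis unfolding canon_def lb lam_def[symmetric] tau_eq Cl_eq[OF False] by simp
  qed
qed

lemma fst_hull:
  assumes "z \<in> convex hull (VtY \<omega> Vt ord (\<alpha>, v, l))"
  shows "fst z \<in> convex hull (Vt \<alpha>)"
proof -
  have "fst z \<in> fst ` (convex hull (VtY \<omega> Vt ord (\<alpha>, v, l)))" using assms by blast
  also have "\<dots> = convex hull (fst ` VtY \<omega> Vt ord (\<alpha>, v, l))" by (rule convex_hull_linear_image[OF linear_fst])
  also have "\<dots> \<subseteq> convex hull (Vt \<alpha>)" by (rule hull_mono) (auto simp: VtY_eq Pup_def Qlo_def)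
  finally show ?thesis .
qed

lemma Y_i:
  fixes l l' :: int
  assumes al: "\<alpha> \<in> I" and v: "v \<in> Vt \<alpha>" and be: "\<beta> \<in> I" and w: "w \<in> Vt \<beta>"
  defines "S \<equiv> VtY \<omega> Vt ord (\<alpha>, v, l)" and "S' \<equiv> VtY \<omega> Vt ord (\<beta>, w, l')"
  shows "convex hull S \<inter> convex hull S' = {} \<or> convex hull S \<inter> convex hull S' = convex hull (S \<inter> S')"
proof -
  have "convex hull S \<inter> convex hull S' \<subseteq> convex hull (S \<inter> S')"
  proof
    fix z assume z: "z \<in> convex hull S \<inter> convex hull S'"
    have zS: "z \<in> convex hull S" and zS': "z \<in> convex hull S'" using z by auto
    have e: "bary S z = bary S' z"
      using canon_eq[OF al v zS[unfolded S_def]] canon_eq[OF be w zS'[unfolded S'_def]]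
        canon_agree[OF al be fst_hull[OF zS[unfolded S_def]] fst_hull[OF zS'[unfolded S'_def]]]
      unfolding S_def S'_def by (simp add: fun_eq_iff)
    have hS: "(\<forall>c. c \<notin> S \<longrightarrow> bary S z c = 0) \<and> sum (bary S z) S = 1 \<and> (\<Sum>c\<in>S. bary S z c *\<^sub>R c) = z \<and> (\<forall>c. 0 \<le> bary S z c)"
      unfolding S_def by (rule bary_hull[OF finVtY[OF al] indVtY[OF al v] zS[unfolded S_def]])
    have hS': "\<forall>c. c \<notin> S' \<longrightarrow> bary S z c = 0"
      using bary_hull[OF finVtY[OF be] indVtY[OF be w] zS'[unfolded S'_def]] e unfolding S'_def by simp
    have fS: "finite S" unfolding S_def using finVtY[OF al] .
    have sub: "S \<inter> S' \<subseteq> S" by blast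
    have s1: "sum (bary S z) (S \<inter> S') = 1"
      using hS sum.mono_neutral_right[OF fS sub, of "bary S z"] hS' by auto
    have s2: "(\<Sum>c\<in>S \<inter> S'. bary S z c *\<^sub>R c) = z"
      using hS sum.mono_neutral_right[OF fS sub, of "\<lambda>c. bary S z c *\<^sub>R c"] hS' by auto
    show "z \<in> convex hull (S \<inter> S')"
      unfolding convex_hull_finite[OF finite_subset[OF sub fS]] using hS s1 s2 by blast
  qed
  moreover have "convex hull (S \<inter> S') \<subseteq> convex hull S \<inter> convex hull S'"
    by (simp add: hull_mono)
  ultimately show ?thesis by blast
qed

end

context LCsetup begin

lemma sum_agree2:
  assumes "finite S" "finite T" "\<forall>c. c \<notin> S \<longrightarrow> f c = 0" "\<forall>c. c \<notin> T \<longrightarrow> f c = 0"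
  shows "sum f S = sum f T"
proof -
  have "sum f S = sum f (S \<inter> T)" by (rule sum.mono_neutral_right) (use assms in auto)
  also have "\<dots> = sum f T" by (rule sum.mono_neutral_left) (use assms in auto)
  finally show ?thesis .
qed

lemma sum_shift:
  assumes al: "\<alpha> \<in> I" and al': "\<alpha>' \<in> I" and z1: "\<forall>c. c \<notin> Vt \<alpha>' \<longrightarrow> f c = 0"
    and z2: "\<forall>w. f w \<noteq> 0 \<longrightarrow> w - t \<in> Vt \<alpha>"
  shows "sum f (Vt \<alpha>') = (\<Sum>u\<in>Vt \<alpha>. f (u + t))"
proof -
  have "sum f (Vt \<alpha>') = sum f ((\<lambda>u. u + t) ` Vt \<alpha>)"
  proof (rule sum_agree2[OF finVt[OF al'] finite_imageI[OF finVt[OF al]] z1], intro allI impI)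
    fix c assume "c \<notin> (\<lambda>u. u + t) ` Vt \<alpha>"
    then have "c - t \<notin> Vt \<alpha>" by (metis (no_types, lifting) diff_add_cancel image_eqI)
    then show "f c = 0" using z2 by blast
  qed
  also have "\<dots> = (\<Sum>u\<in>Vt \<alpha>. f (u + t))" by (simp add: sum.reindex inj_on_def)
  finally show ?thesis .
qed

lemma bary_shift:
  assumes al: "\<alpha> \<in> I" and al': "\<alpha>' \<in> I" and x: "x \<in> convex hull (Vt \<alpha>)" and t: "t \<in> L"
    and x': "x + t \<in> convex hull (Vt \<alpha>')"
  shows "bary (Vt \<alpha>') (x + t) w = bary (Vt \<alpha>) x (w - t)"
proof -
  define lam where "lam = bary (Vt \<alpha>) x"
  note h = bhX[OF al x, folded lam_def]
  have sp: "SpVt (Vt \<alpha>') (x + t) = (\<lambda>v. v + t) ` SpVt (Vt \<alpha>) x" using LC_v[OF al al' x t x'] .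
  have nz: "w - t \<in> Vt \<alpha> \<and> w \<in> Vt \<alpha>'" if "lam (w - t) \<noteq> 0" for w
  proof -
    have w1: "w - t \<in> Vt \<alpha>" using h that by blast
    have "lam (w - t) > 0" using h that by (metis order_le_less)
    then have "w - t \<in> SpVt (Vt \<alpha>) x" unfolding SpVt_def lam_def using w1 by simp
    then have "w \<in> SpVt (Vt \<alpha>') (x + t)" unfolding sp by (metis diff_add_cancel image_eqI)
    then show ?thesis using w1 unfolding SpVt_def by simp
  qed
  have z1: "\<forall>c. c \<notin> Vt \<alpha>' \<longrightarrow> lam (c - t) = 0" using nz by blast
  have "bary (Vt \<alpha>') (x + t) = (\<lambda>w. lam (w - t))"
  proof (rule bary_unique[OF finVt[OF al'] indVt[OF al'] z1])
    have "sum (\<lambda>w. lam (w - t)) (Vt \<alpha>') = (\<Sum>u\<in>Vt \<alpha>. lam (u + t - t))"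
      by (rule sum_shift[OF al al']) (use z1 nz in auto)
    then show "sum (\<lambda>w. lam (w - t)) (Vt \<alpha>') = 1" using h by simp
    have "(\<Sum>w\<in>Vt \<alpha>'. lam (w - t) *\<^sub>R w) = (\<Sum>u\<in>Vt \<alpha>. lam (u + t - t) *\<^sub>R (u + t))"
      by (rule sum_shift[OF al al']) (use z1 nz in auto)
    also have "\<dots> = (\<Sum>u\<in>Vt \<alpha>. lam u *\<^sub>R u) + (\<Sum>u\<in>Vt \<alpha>. lam u) *\<^sub>R t"
      by (simp add: scaleR_add_right sum.distrib scaleR_sum_left)
    finally show "(\<Sum>w\<in>Vt \<alpha>'. lam (w - t) *\<^sub>R w) = x + t" using h by simp
  qed
  then show ?thesis unfolding lam_def by simp
qed

definition dl :: "'a \<Rightarrow> real" where "dl t = \<omega> t - of_int \<lfloor>\<omega> t\<rfloor>"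
definition hi :: "'a \<Rightarrow> 'a \<Rightarrow> bool" where "hi t u \<longleftrightarrow> A u + dl t > 1"

lemma dl_bounds: "0 \<le> dl t" "dl t < 1" unfolding dl_def by linarith+

lemma a_shift: "a (u + t) = a u - \<lfloor>\<omega> t\<rfloor> - (if hi t u then 1 else 0)"
proof -
  have cq: "\<lceil>\<omega> u + \<omega> t\<rceil> = \<lceil>\<omega> u\<rceil> + \<lfloor>\<omega> t\<rfloor> + (if hi t u then 1 else 0)"
  proof (rule ceiling_unique)
    have c1: "\<omega> u \<le> of_int \<lceil>\<omega> u\<rceil>" "of_int \<lceil>\<omega> u\<rceil> - 1 < \<omega> u"
      "of_int \<lfloor>\<omega> t\<rfloor> \<le> \<omega> t" "\<omega> t < of_int \<lfloor>\<omega> t\<rfloor> + 1" by linarith+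
    have hh: "hi t u \<longleftrightarrow> \<omega> u - of_int \<lceil>\<omega> u\<rceil> + dl t > 0"
      unfolding hi_def A_fun_def a_int_def by (simp add: algebra_simps)
    show "of_int (\<lceil>\<omega> u\<rceil> + \<lfloor>\<omega> t\<rfloor> + (if hi t u then 1 else 0)) - 1 < \<omega> u + \<omega> t"
      using c1 hh dl_bounds[of t] unfolding dl_def by (cases "hi t u"; simp only: if_True if_False of_int_add of_int_1 of_int_0 simp_thms; linarith)
    show "\<omega> u + \<omega> t \<le> of_int (\<lceil>\<omega> u\<rceil> + \<lfloor>\<omega> t\<rfloor> + (if hi t u then 1 else 0))"
      using c1 hh dl_bounds[of t] unfolding dl_def by (cases "hi t u"; simp only: if_True if_False of_int_add of_int_1 of_int_0 simp_thms; linarith)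
  qed
  show ?thesis unfolding a_int_def om_add cq by simp
qed

lemma A_shift: "A (u + t) = A u + dl t - (if hi t u then 1 else 0)"
  unfolding A_eq a_shift om_add dl_def by (cases "hi t u") simp_all

end

context LCsetup begin

lemma oA_shift:
  assumes al: "\<alpha> \<in> I" and al': "\<alpha>' \<in> I" and t: "t \<in> L"
    and u: "u \<in> Vt \<alpha>" "u + t \<in> Vt \<alpha>'" and w: "w \<in> Vt \<alpha>" "w + t \<in> Vt \<alpha>'"
  shows "oA \<alpha>' (w + t) (u + t) \<longleftrightarrow> (hi t w \<and> \<not> hi t u) \<or> (hi t w = hi t u \<and> oA \<alpha> w u)"
proof -
  have o: "ord \<alpha>' (w + t) (u + t) \<longleftrightarrow> ord \<alpha> w u" using LC_iii[OF al al' w(1) u(1) t w(2) u(2)] by simp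
  have b: "0 < A u" "A u \<le> 1" "0 < A w" "A w \<le> 1" "0 \<le> dl t" "dl t < 1" using A_pos A_le1 dl_bounds by auto
  show ?thesis unfolding ordA_def A_shift o using b unfolding hi_def by auto
qed

lemma shift_setup:
  assumes al: "\<alpha> \<in> I" and al': "\<alpha>' \<in> I" and x: "x \<in> convex hull (Vt \<alpha>)" and t: "t \<in> L"
    and x': "x + t \<in> convex hull (Vt \<alpha>')"
  shows "\<And>u. bary (Vt \<alpha>') (x + t) (u + t) = bary (Vt \<alpha>) x u"
    and "\<And>u. bary (Vt \<alpha>) x u \<noteq> 0 \<Longrightarrow> u \<in> Vt \<alpha> \<and> u + t \<in> Vt \<alpha>'"
proof -
  show e: "bary (Vt \<alpha>') (x + t) (u + t) = bary (Vt \<alpha>) x u" for u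
    using bary_shift[OF al al' x t x', of "u + t"] by simp
  fix u assume "bary (Vt \<alpha>) x u \<noteq> 0"
  then show "u \<in> Vt \<alpha> \<and> u + t \<in> Vt \<alpha>'" using bhX[OF al x] bhX[OF al' x'] e[of u] by metis
qed

definition hmass :: "'i \<Rightarrow> 'a \<Rightarrow> 'a \<Rightarrow> real" where
  "hmass \<alpha> x t = (\<Sum>w\<in>Vt \<alpha>. if hi t w then bary (Vt \<alpha>) x w else 0)"

lemma Cl_shift:
  assumes al: "\<alpha> \<in> I" and al': "\<alpha>' \<in> I" and x: "x \<in> convex hull (Vt \<alpha>)" and t: "t \<in> L"
    and x': "x + t \<in> convex hull (Vt \<alpha>')" and nz: "bary (Vt \<alpha>) x u \<noteq> 0"
  shows "Cl (bary (Vt \<alpha>') (x + t)) \<alpha>' (u + t) = Cl (bary (Vt \<alpha>) x) \<alpha> u + hmass \<alpha> x t - (if hi t u then 1 else 0)"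
proof -
  define lam where "lam = bary (Vt \<alpha>) x"
  define lam' where "lam' = bary (Vt \<alpha>') (x + t)"
  note S = shift_setup[OF al al' x t x', folded lam_def lam'_def]
  note h = bhX[OF al x, folded lam_def]
  note h' = bhX[OF al' x', folded lam'_def]
  have uu: "u \<in> Vt \<alpha>" "u + t \<in> Vt \<alpha>'" using S(2) nz lam_def by auto
  have "Cl lam' \<alpha>' (u + t) = (\<Sum>w\<in>Vt \<alpha>'. if oA \<alpha>' w (u + t) then lam' w else 0)"
    unfolding Cl_def by (simp add: sum.inter_filter[OF finVt[OF al']])
  also have "\<dots> = (\<Sum>w\<in>Vt \<alpha>. if oA \<alpha>' (w + t) (u + t) then lam' (w + t) else 0)"
  proof (rule sum_shift[OF al al'])
    show "\<forall>c. c \<notin> Vt \<alpha>' \<longrightarrow> (if oA \<alpha>' c (u + t) then lam' c else 0) = 0" using h' by simp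
    show "\<forall>w. (if oA \<alpha>' w (u + t) then lam' w else 0) \<noteq> 0 \<longrightarrow> w - t \<in> Vt \<alpha>"
      using S(1)[of "w - t" for w] S(2) by (metis diff_add_cancel)
  qed
  also have "\<dots> = (\<Sum>w\<in>Vt \<alpha>. if (hi t w \<and> \<not> hi t u) \<or> (hi t w = hi t u \<and> oA \<alpha> w u) then lam w else 0)"
  proof (rule sum.cong[OF refl])
    fix w assume w: "w \<in> Vt \<alpha>"
    show "(if oA \<alpha>' (w + t) (u + t) then lam' (w + t) else 0) =
          (if (hi t w \<and> \<not> hi t u) \<or> (hi t w = hi t u \<and> oA \<alpha> w u) then lam w else 0)"
    proof (cases "lam w = 0")
      case True then show ?thesis using S(1) by simp
    next
      case False
      then have "w + t \<in> Vt \<alpha>'" using S(2) by blast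
      then show ?thesis using oA_shift[OF al al' t uu w] S(1) by simp
    qed
  qed
  also have "\<dots> = Cl lam \<alpha> u + hmass \<alpha> x t - (if hi t u then 1 else 0)"
  proof -
    have b: "0 < A u" "A u \<le> 1" "0 \<le> dl t" "dl t < 1" using A_pos A_le1 dl_bounds by auto
    have Cle: "Cl lam \<alpha> u = (\<Sum>w\<in>Vt \<alpha>. if oA \<alpha> w u then lam w else 0)"
      unfolding Cl_def by (simp add: sum.inter_filter[OF finVt[OF al]])
    have hm: "hmass \<alpha> x t = (\<Sum>w\<in>Vt \<alpha>. if hi t w then lam w else 0)" unfolding hmass_def lam_def ..
    show ?thesis
    proof (cases "hi t u")
      case False
      have "(\<Sum>w\<in>Vt \<alpha>. if (hi t w \<and> \<not> hi t u) \<or> (hi t w = hi t u \<and> oA \<alpha> w u) then lam w else 0)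
          = (\<Sum>w\<in>Vt \<alpha>. (if oA \<alpha> w u then lam w else 0) + (if hi t w then lam w else 0))"
      proof (rule sum.cong[OF refl])
        fix w assume w: "w \<in> Vt \<alpha>"
        have "hi t w \<Longrightarrow> \<not> oA \<alpha> w u" using False b A_le1[of w] unfolding hi_def ordA_def by auto
        then show "(if (hi t w \<and> \<not> hi t u) \<or> (hi t w = hi t u \<and> oA \<alpha> w u) then lam w else 0)
          = (if oA \<alpha> w u then lam w else 0) + (if hi t w then lam w else 0)" using False by auto
      qed
      then show ?thesis using False Cle hm by (simp add: sum.distrib)
    next
      case True
      have "(\<Sum>w\<in>Vt \<alpha>. if oA \<alpha> w u then lam w else 0) =
            (\<Sum>w\<in>Vt \<alpha>. (if (hi t w \<and> \<not> hi t u) \<or> (hi t w = hi t u \<and> oA \<alpha> w u) then lam w else 0)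
                 + (lam w - (if hi t w then lam w else 0)))"
      proof (rule sum.cong[OF refl])
        fix w assume w: "w \<in> Vt \<alpha>"
        have "\<not> hi t w \<Longrightarrow> oA \<alpha> w u" using True b A_pos[of w] unfolding hi_def ordA_def by auto
        then show "(if oA \<alpha> w u then lam w else 0) =
            (if (hi t w \<and> \<not> hi t u) \<or> (hi t w = hi t u \<and> oA \<alpha> w u) then lam w else 0)
                 + (lam w - (if hi t w then lam w else 0))" using True by auto
      qed
      then show ?thesis using True Cle hm h by (simp add: sum.distrib sum_subtractf)
    qed
  qed
  finally show ?thesis unfolding lam_def lam'_def .
qed

lemma tau_shift:
  assumes al: "\<alpha> \<in> I" and al': "\<alpha>' \<in> I" and x: "fst z \<in> convex hull (Vt \<alpha>)" and t: "t \<in> L"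
    and x': "fst z + t \<in> convex hull (Vt \<alpha>')"
  shows "tau \<alpha>' (z + (t, of_int cc)) = tau \<alpha> z + of_int \<lfloor>\<omega> t\<rfloor> + of_int cc + hmass \<alpha> (fst z) t"
proof -
  define lam where "lam = bary (Vt \<alpha>) (fst z)"
  define lam' where "lam' = bary (Vt \<alpha>') (fst z + t)"
  note S = shift_setup[OF al al' x t x', folded lam_def lam'_def]
  note h = bhX[OF al x, folded lam_def]
  note h' = bhX[OF al' x', folded lam'_def]
  have "(\<Sum>w\<in>Vt \<alpha>'. lam' w * A w) = (\<Sum>u\<in>Vt \<alpha>. lam' (u + t) * A (u + t))"
  proof (rule sum_shift[OF al al'])
    show "\<forall>c. c \<notin> Vt \<alpha>' \<longrightarrow> lam' c * A c = 0" using h' by simp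
    show "\<forall>w. lam' w * A w \<noteq> 0 \<longrightarrow> w - t \<in> Vt \<alpha>"
      using S(1)[of "w - t" for w] S(2) by (metis diff_add_cancel mult_eq_0_iff)
  qed
  also have "\<dots> = (\<Sum>u\<in>Vt \<alpha>. lam u * A u + dl t * lam u - (if hi t u then lam u else 0))"
    unfolding S(1) A_shift by (intro sum.cong refl) (simp add: algebra_simps)
  also have "\<dots> = (\<Sum>u\<in>Vt \<alpha>. lam u * A u) + dl t - hmass \<alpha> (fst z) t"
    unfolding sum.distrib sum_subtractf hmass_def lam_def[symmetric] sum_distrib_left[symmetric] using h by simp
  finally have e: "(\<Sum>w\<in>Vt \<alpha>'. lam' w * A w) = (\<Sum>u\<in>Vt \<alpha>. lam u * A u) + dl t - hmass \<alpha> (fst z) t" .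
  have "Om (z + (t, of_int cc)) = Om z + \<omega> t + of_int cc" unfolding Om_def by (simp add: om_add)
  moreover have "tau \<alpha>' (z + (t, of_int cc)) = Om (z + (t, of_int cc)) - (\<Sum>w\<in>Vt \<alpha>'. lam' w * A w)"
    unfolding tau_def lam'_def by simp
  moreover have "tau \<alpha> z = Om z - (\<Sum>u\<in>Vt \<alpha>. lam u * A u)" unfolding tau_def lam_def by simp
  ultimately show ?thesis unfolding e dl_def by simp
qed

lemma canon_shift:
  assumes al: "\<alpha> \<in> I" and al': "\<alpha>' \<in> I" and x: "fst z \<in> convex hull (Vt \<alpha>)" and t: "t \<in> L"
    and x': "fst z + t \<in> convex hull (Vt \<alpha>')"
  shows "canon \<alpha>' (z + (t, of_int cc)) (\<rho> + (t, of_int cc)) = canon \<alpha> z \<rho>"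
proof -
  obtain u n where \<rho>: "\<rho> = (u, n)" by (cases \<rho>)
  define lam where "lam = bary (Vt \<alpha>) (fst z)"
  note S = shift_setup[OF al al' x t x', folded lam_def]
  have fz: "fst (z + (t, of_int cc)) = fst z + t" by simp
  have sh: "(n + of_int cc) - a (u + t) = (n - a u) + of_int (cc + \<lfloor>\<omega> t\<rfloor> + (if hi t u then 1 else 0))"
    unfolding a_shift by simp
  have Zi: "(n + of_int cc) - a (u + t) \<in> \<int> \<longleftrightarrow> n - a u \<in> \<int>"
    unfolding sh by (metis Ints_add Ints_diff Ints_of_int add_diff_cancel_right')
  show ?thesis
  proof (cases "lam u = 0")
    case True
    then show ?thesis unfolding canon_def \<rho> fz using S(1)[of u] lam_def by (simp add: clampZ)
  next
    case False
    have Cs: "Cl (bary (Vt \<alpha>') (fst z + t)) \<alpha>' (u + t) = Cl lam \<alpha> u + hmass \<alpha> (fst z) t - (if hi t u then 1 else 0)"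
      using Cl_shift[OF al al' x t x'] False lam_def by simp
    have ts: "tau \<alpha>' (z + (t, of_int cc)) = tau \<alpha> z + of_int \<lfloor>\<omega> t\<rfloor> + of_int cc + hmass \<alpha> (fst z) t"
      by (rule tau_shift[OF al al' x t x'])
    have a1: "tau \<alpha>' (z + (t, of_int cc)) - ((n + of_int cc) - a (u + t)) + 1 - Cl (bary (Vt \<alpha>') (fst z + t)) \<alpha>' (u + t)
          = tau \<alpha> z - (n - a u) + 1 - Cl lam \<alpha> u"
      unfolding ts sh Cs by (cases "hi t u") (simp_all add: algebra_simps)
    have a2: "tau \<alpha>' (z + (t, of_int cc)) - ((n + of_int cc) - a (u + t)) - Cl (bary (Vt \<alpha>') (fst z + t)) \<alpha>' (u + t)
          = tau \<alpha> z - (n - a u) - Cl lam \<alpha> u"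
      unfolding ts sh Cs by (cases "hi t u") (simp_all add: algebra_simps)
    show ?thesis unfolding canon_def \<rho> fz fst_add snd_add fst_conv snd_conv Zi a1 a2 S(1) lam_def by simp
  qed
qed

end

context LCsetup begin

lemma spvt_canon:
  assumes al: "\<alpha> \<in> I" and v: "v \<in> Vt \<alpha>" and z: "z \<in> convex hull (VtY \<omega> Vt ord (\<alpha>, v, l))"
  shows "SpVt (VtY \<omega> Vt ord (\<alpha>, v, l)) z = {c. canon \<alpha> z c > 0}"
proof -
  have "\<forall>c. c \<notin> VtY \<omega> Vt ord (\<alpha>, v, l) \<longrightarrow> bary (VtY \<omega> Vt ord (\<alpha>, v, l)) z c = 0"
    using bary_hull[OF finVtY[OF al] indVtY[OF al v] z] by blast
  then show ?thesis unfolding SpVt_def using canon_eq[OF al v z] by (auto simp del: prod.collapse) (metis less_irrefl)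
qed

lemma Y_v:
  fixes cc :: int
  assumes al: "\<alpha> \<in> I" and v: "v \<in> Vt \<alpha>" and al': "\<alpha>' \<in> I" and v': "v' \<in> Vt \<alpha>'"
    and z: "z \<in> convex hull (VtY \<omega> Vt ord (\<alpha>, v, l))" and t: "t \<in> L"
    and z': "z + (t, of_int cc) \<in> convex hull (VtY \<omega> Vt ord (\<alpha>', v', l'))"
  shows "SpVt (VtY \<omega> Vt ord (\<alpha>', v', l')) (z + (t, of_int cc)) = (\<lambda>\<rho>. \<rho> + (t, of_int cc)) ` SpVt (VtY \<omega> Vt ord (\<alpha>, v, l)) z"
proof -
  have x: "fst z \<in> convex hull (Vt \<alpha>)" using fst_hull[OF z] .
  have x': "fst z + t \<in> convex hull (Vt \<alpha>')" using fst_hull[OF z'] by simp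
  note cs = canon_shift[OF al al' x t x', of cc]
  show ?thesis unfolding spvt_canon[OF al v z] spvt_canon[OF al' v' z']
  proof (intro set_eqI iffI)
    fix c assume "c \<in> {c. 0 < canon \<alpha>' (z + (t, of_int cc)) c}"
    then have "0 < canon \<alpha> z (c - (t, of_int cc))" using cs[of "c - (t, of_int cc)"] by simp
    then show "c \<in> (\<lambda>\<rho>. \<rho> + (t, of_int cc)) ` {c. 0 < canon \<alpha> z c}"
      by (intro image_eqI[of _ _ "c - (t, of_int cc)"]) auto
  next
    fix c assume "c \<in> (\<lambda>\<rho>. \<rho> + (t, of_int cc)) ` {c. 0 < canon \<alpha> z c}"
    then show "c \<in> {c. 0 < canon \<alpha>' (z + (t, of_int cc)) c}" using cs by auto
  qed
qed

lemma fstY: "\<rho> \<in> VtY \<omega> Vt ord (\<alpha>, v, l) \<Longrightarrow> fst \<rho> \<in> Vt \<alpha>"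
  unfolding VtY_eq Pup_def Qlo_def by auto

lemma Y_ii:
  assumes al: "\<alpha> \<in> I" and be: "\<beta> \<in> I"
    and r: "\<rho> \<in> VtY \<omega> Vt ord (\<alpha>, v, l) \<inter> VtY \<omega> Vt ord (\<beta>, w, l')"
    and s: "\<sigma> \<in> VtY \<omega> Vt ord (\<alpha>, v, l) \<inter> VtY \<omega> Vt ord (\<beta>, w, l')"
  shows "ordY ord (\<alpha>, v, l) \<rho> \<sigma> \<longleftrightarrow> ordY ord (\<beta>, w, l') \<rho> \<sigma>"
proof -
  have "fst \<rho> \<in> Vt \<alpha> \<inter> Vt \<beta>" "fst \<sigma> \<in> Vt \<alpha> \<inter> Vt \<beta>" using r s fstY by blast+
  then show ?thesis unfolding ordY_def using LC_ii[OF al be] by simp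
qed

lemma Y_iii:
  fixes cc :: int
  assumes al: "\<alpha> \<in> I" and al': "\<alpha>' \<in> I" and t: "t \<in> L"
    and r: "\<rho> \<in> VtY \<omega> Vt ord (\<alpha>, v, l)" and s: "\<sigma> \<in> VtY \<omega> Vt ord (\<alpha>, v, l)"
    and r': "\<rho> + (t, of_int cc) \<in> VtY \<omega> Vt ord (\<alpha>', v', l')" and s': "\<sigma> + (t, of_int cc) \<in> VtY \<omega> Vt ord (\<alpha>', v', l')"
  shows "ordY ord (\<alpha>, v, l) \<rho> \<sigma> \<longleftrightarrow> ordY ord (\<alpha>', v', l') (\<rho> + (t, of_int cc)) (\<sigma> + (t, of_int cc))"
proof -
  have "fst \<rho> + t \<in> Vt \<alpha>'" "fst \<sigma> + t \<in> Vt \<alpha>'" using fstY[OF r'] fstY[OF s'] by simp_all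
  then have "ord \<alpha> (fst \<rho>) (fst \<sigma>) \<longleftrightarrow> ord \<alpha>' (fst \<rho> + t) (fst \<sigma> + t)"
    using LC_iii[OF al al' fstY[OF r] fstY[OF s] t] by simp
  then show ?thesis unfolding ordY_def by auto
qed

lemma Om_comb: "Om (\<Sum>\<rho>\<in>S. c \<rho> *\<^sub>R \<rho>) = (\<Sum>\<rho>\<in>S. c \<rho> * Om \<rho>)"
proof -
  have "\<omega> (\<Sum>\<rho>\<in>S. c \<rho> *\<^sub>R fst \<rho>) = (\<Sum>\<rho>\<in>S. c \<rho> * \<omega> (fst \<rho>))"
    by (simp add: linear_sum[OF lin] linear_scale[OF lin])
  then show ?thesis unfolding Om_def fst_sum snd_sum by (simp add: sum.distrib algebra_simps)
qed

lemma Om_bounds: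
  assumes al: "\<alpha> \<in> I" and v: "v \<in> Vt \<alpha>" and k: "\<kappa> \<in> convex hull (VtY \<omega> Vt ord (\<alpha>, v, l))"
  shows "A v + l - 1 \<le> Om \<kappa> \<and> Om \<kappa> \<le> A v + l"
proof -
  let ?S = "VtY \<omega> Vt ord (\<alpha>, v, l)"
  have vb: "A v + l - 1 \<le> Om \<rho> \<and> Om \<rho> \<le> A v + l" if "\<rho> \<in> ?S" for \<rho>
  proof -
    have "(\<exists>u. u \<in> Pup \<alpha> v \<and> \<rho> = up u l) \<or> (\<exists>u. u \<in> Qlo \<alpha> v \<and> \<rho> = lo u l)"
      using that unfolding VtY_eq by auto
    then show ?thesis
    proof
      assume "\<exists>u. u \<in> Pup \<alpha> v \<and> \<rho> = up u l"
      then obtain u where u: "u \<in> Pup \<alpha> v" "\<rho> = up u l" by blast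
      have "A u \<le> A v" using u(1) unfolding Pup_def ordA_def by auto
      then show ?thesis using u A_pos[of u] A_le1[of v] unfolding Om_def A_eq by simp
    next
      assume "\<exists>u. u \<in> Qlo \<alpha> v \<and> \<rho> = lo u l"
      then obtain u where u: "u \<in> Qlo \<alpha> v" "\<rho> = lo u l" by blast
      have "A v \<le> A u" using u(1) unfolding Qlo_def ordA_def by auto
      then show ?thesis using u A_le1[of u] A_pos[of v] unfolding Om_def A_eq by simp
    qed
  qed
  obtain \<mu> where \<mu>: "\<forall>c\<in>?S. 0 \<le> \<mu> c" "sum \<mu> ?S = 1" "(\<Sum>c\<in>?S. \<mu> c *\<^sub>R c) = \<kappa>"
    using k convex_hull_finite[OF finVtY[OF al]] by auto
  have e: "Om \<kappa> = (\<Sum>c\<in>?S. \<mu> c * Om c)" using Om_comb \<mu>(3) by metis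
  have "(\<Sum>c\<in>?S. \<mu> c * (A v + l - 1)) \<le> (\<Sum>c\<in>?S. \<mu> c * Om c)"
    by (rule sum_mono) (use \<mu>(1) vb in \<open>simp add: mult_left_mono\<close>)
  moreover have "(\<Sum>c\<in>?S. \<mu> c * Om c) \<le> (\<Sum>c\<in>?S. \<mu> c * (A v + l))"
    by (rule sum_mono) (use \<mu>(1) vb in \<open>simp add: mult_left_mono\<close>)
  ultimately show ?thesis using e \<mu>(2) by (simp add: sum_distrib_right[symmetric])
qed

end

context LCsetup begin

lemma oA_max:
  assumes al: "\<alpha> \<in> I" and fin: "finite S" and ne: "S \<noteq> {}" and sub: "S \<subseteq> Vt \<alpha>"
  shows "\<exists>m\<in>S. \<forall>s\<in>S. s \<noteq> m \<longrightarrow> oA \<alpha> s m"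
  using fin ne sub
proof (induction S rule: finite_ne_induct)
  case (singleton x) then show ?case by simp
next
  case (insert x F)
  then obtain m where m: "m \<in> F" "\<forall>s\<in>F. s \<noteq> m \<longrightarrow> oA \<alpha> s m" by auto
  have xm: "x \<in> Vt \<alpha>" "m \<in> Vt \<alpha>" using insert m by auto
  have "x \<noteq> m" using insert m by auto
  then have "oA \<alpha> m x \<or> oA \<alpha> x m" using oA_total[OF al xm(2) xm(1)] by blast
  then show ?case
  proof
    assume h: "oA \<alpha> m x"
    have "\<forall>s\<in>insert x F. s \<noteq> x \<longrightarrow> oA \<alpha> s x"
    proof (intro ballI impI)
      fix s assume s: "s \<in> insert x F" "s \<noteq> x"
      then have sF: "s \<in> F" by simp
      show "oA \<alpha> s x"
      proof (cases "s = m")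
        case True then show ?thesis using h by simp
      next
        case False then show ?thesis using m sF oA_trans[OF al _ xm(2) xm(1) _ h] insert by blast
      qed
    qed
    then show ?case by blast
  next
    assume h: "oA \<alpha> x m"
    then show ?case using m by (intro bexI[of _ m]) auto
  qed
qed

lemma oA_min:
  assumes al: "\<alpha> \<in> I" and fin: "finite S" and ne: "S \<noteq> {}" and sub: "S \<subseteq> Vt \<alpha>"
  shows "\<exists>m\<in>S. \<forall>s\<in>S. s \<noteq> m \<longrightarrow> oA \<alpha> m s"
  using fin ne sub
proof (induction S rule: finite_ne_induct)
  case (singleton x) then show ?case by simp
next
  case (insert x F)
  then obtain m where m: "m \<in> F" "\<forall>s\<in>F. s \<noteq> m \<longrightarrow> oA \<alpha> m s" by auto
  have xm: "x \<in> Vt \<alpha>" "m \<in> Vt \<alpha>" using insert m by auto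
  have "x \<noteq> m" using insert m by auto
  then have "oA \<alpha> m x \<or> oA \<alpha> x m" using oA_total[OF al xm(2) xm(1)] by blast
  then show ?case
  proof
    assume h: "oA \<alpha> x m"
    have "\<forall>s\<in>insert x F. s \<noteq> x \<longrightarrow> oA \<alpha> x s"
    proof (intro ballI impI)
      fix s assume s: "s \<in> insert x F" "s \<noteq> x"
      then have sF: "s \<in> F" by simp
      show "oA \<alpha> x s"
      proof (cases "s = m")
        case True then show ?thesis using h by simp
      next
        case False then show ?thesis using m sF oA_trans[OF al xm(1) xm(2) _ h] insert by blast
      qed
    qed
    then show ?case by blast
  next
    assume h: "oA \<alpha> m x"
    then show ?case using m by (intro bexI[of _ m]) auto
  qed
qed

lemma exists_v:
  assumes al: "\<alpha> \<in> I" and nn: "\<forall>w\<in>Vt \<alpha>. 0 \<le> lam w" and s: "sum lam (Vt \<alpha>) = 1"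
    and t0: "0 \<le> t" and t1: "t \<le> 1"
  shows "\<exists>v\<in>Vt \<alpha>. Cl lam \<alpha> v \<le> t \<and> t \<le> Cl lam \<alpha> v + lam v"
proof -
  have fin: "finite (Vt \<alpha>)" using finVt[OF al] .
  have neV: "Vt \<alpha> \<noteq> {}" using s by auto
  obtain m0 where m0: "m0 \<in> Vt \<alpha>" "\<forall>s\<in>Vt \<alpha>. s \<noteq> m0 \<longrightarrow> oA \<alpha> m0 s"
    using oA_min[OF al fin neV] by blast
  have "{w\<in>Vt \<alpha>. oA \<alpha> w m0} = {}"
  proof (rule ccontr)
    assume "{w\<in>Vt \<alpha>. oA \<alpha> w m0} \<noteq> {}"
    then obtain w where w: "w \<in> Vt \<alpha>" "oA \<alpha> w m0" by blast
    then have "w \<noteq> m0" using oA_irrefl[OF al] by blast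
    then have "oA \<alpha> m0 w" using m0(2) w(1) by blast
    then show False using oA_asym[OF al m0(1) w(1)] w(2) by blast
  qed
  then have "Cl lam \<alpha> m0 = 0" unfolding Cl_def by (metis sum.empty)
  define P where "P = {u\<in>Vt \<alpha>. Cl lam \<alpha> u \<le> t}"
  have neP: "P \<noteq> {}" using m0 \<open>Cl lam \<alpha> m0 = 0\<close> t0 unfolding P_def by auto
  obtain v where v: "v \<in> P" "\<forall>s\<in>P. s \<noteq> v \<longrightarrow> oA \<alpha> s v"
    using oA_max[OF al _ neP] fin unfolding P_def by auto
  have vV: "v \<in> Vt \<alpha>" using v P_def by simp
  show ?thesis
  proof (rule bexI[OF _ vV], rule conjI)
    show "Cl lam \<alpha> v \<le> t" using v P_def by simp
    show "t \<le> Cl lam \<alpha> v + lam v"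
    proof (rule ccontr)
      assume lt: "\<not> t \<le> Cl lam \<alpha> v + lam v"
      define Q where "Q = {u\<in>Vt \<alpha>. oA \<alpha> v u}"
      show False
      proof (cases "Q = {}")
        case True
        define X where "X = {w\<in>Vt \<alpha>. oA \<alpha> w v}"
        have E: "Vt \<alpha> = insert v X"
          using True vV oA_total[OF al _ vV] unfolding Q_def X_def by blast
        have nX: "v \<notin> X" using oA_irrefl[OF al vV] X_def by blast
        have fX: "finite X" using fin X_def by simp
        have "sum lam (Vt \<alpha>) = sum lam (insert v X)" using E by (rule arg_cong)
        also have "\<dots> = lam v + sum lam X" by (rule sum.insert[OF fX nX])
        finally have "sum lam (Vt \<alpha>) = lam v + Cl lam \<alpha> v" unfolding Cl_def X_def .
        then show False using s lt t1 by simp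
      next
        case False
        have fQ: "finite Q" and sQ: "Q \<subseteq> Vt \<alpha>" using fin unfolding Q_def by auto
        obtain w where w: "w \<in> Q" "\<forall>s\<in>Q. s \<noteq> w \<longrightarrow> oA \<alpha> w s"
          using oA_min[OF al fQ False sQ] by blast
        have wV: "w \<in> Vt \<alpha>" and vw: "oA \<alpha> v w" using w(1) unfolding Q_def by auto
        define X where "X = {w'\<in>Vt \<alpha>. oA \<alpha> w' v}"
        have eq: "{w'\<in>Vt \<alpha>. oA \<alpha> w' w} = insert v X"
        proof (intro set_eqI iffI)
          fix x assume x: "x \<in> {w'\<in>Vt \<alpha>. oA \<alpha> w' w}"
          then have xV: "x \<in> Vt \<alpha>" and xw: "oA \<alpha> x w" by auto
          show "x \<in> insert v X"
          proof (rule ccontr)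
            assume "x \<notin> insert v X"
            then have "x \<noteq> v" "\<not> oA \<alpha> x v" using xV unfolding X_def by auto
            then have "oA \<alpha> v x" using oA_total[OF al xV vV] by blast
            then have xQ: "x \<in> Q" using xV Q_def by simp
            show False
            proof (cases "x = w")
              case True then show False using xw oA_irrefl[OF al wV] by simp
            next
              case False then have "oA \<alpha> w x" using w(2) xQ by blast
              then show False using oA_asym[OF al wV xV] xw by blast
            qed
          qed
        next
          fix x assume "x \<in> insert v X"
          then have "x = v \<or> (x \<in> Vt \<alpha> \<and> oA \<alpha> x v)" unfolding X_def by blast
          then show "x \<in> {w'\<in>Vt \<alpha>. oA \<alpha> w' w}"
          proof
            assume "x = v" then show ?thesis using vV vw by simp
          next
            assume h: "x \<in> Vt \<alpha> \<and> oA \<alpha> x v"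
            then have "oA \<alpha> x w" using oA_trans[OF al _ vV wV _ vw] by blast
            then show ?thesis using h by simp
          qed
        qed
        have nX: "v \<notin> X" using oA_irrefl[OF al vV] X_def by blast
        have fX: "finite X" using fin X_def by simp
        have "Cl lam \<alpha> w = sum lam (insert v X)" unfolding Cl_def eq ..
        also have "\<dots> = lam v + sum lam X" by (rule sum.insert[OF fX nX])
        also have "\<dots> = lam v + Cl lam \<alpha> v" unfolding Cl_def X_def ..
        finally have "Cl lam \<alpha> w = lam v + Cl lam \<alpha> v" .
        then have "w \<in> P" using lt wV P_def by simp
        moreover have "w \<noteq> v" using vw oA_irrefl[OF al vV] by blast
        ultimately show False using v(2) vw oA_asym[OF al vV wV] by blast
      qed
    qed
  qed
qed

end

context LCsetup begin

lemma construct: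
  assumes al: "\<alpha> \<in> I" and x: "x \<in> convex hull (Vt \<alpha>)" and v: "v \<in> Vt \<alpha>"
    and t1: "Cl (bary (Vt \<alpha>) x) \<alpha> v \<le> t" and t2: "t \<le> Cl (bary (Vt \<alpha>) x) \<alpha> v + bary (Vt \<alpha>) x v"
  shows "(x, (\<Sum>u\<in>Vt \<alpha>. bary (Vt \<alpha>) x u * a u) + (real_of_int l - 1) + t) \<in> convex hull (VtY \<omega> Vt ord (\<alpha>, v, l))"
proof -
  define lam where "lam = bary (Vt \<alpha>) x"
  note h = bhX[OF al x, folded lam_def]
  define \<theta> where "\<theta> = t - Cl lam \<alpha> v"
  define \<mu> where "\<mu> = (\<lambda>\<rho>. if \<rho> = up v l then \<theta> else if \<rho> = lo v l then lam v - \<theta> else lam (fst \<rho>))"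
  let ?S = "VtY \<omega> Vt ord (\<alpha>, v, l)"
  have th: "0 \<le> \<theta>" "\<theta> \<le> lam v" using t1 t2 \<theta>_def lam_def by auto
  have lo_ne: "lo u l \<noteq> up w l" for u w by simp
  have lamq: "lamOf \<mu> \<alpha> v l = lam"
  proof
    fix u show "lamOf \<mu> \<alpha> v l u = lam u"
    proof (cases "u \<in> Vt \<alpha>")
      case False then show ?thesis using lamOf_out h by simp
    next
      case u: True
      have "u = v \<or> oA \<alpha> u v \<or> oA \<alpha> v u" using oA_total[OF al u v] by blast
      moreover
      { assume "u = v" then have ?thesis using lamOf_v[OF v] unfolding \<mu>_def by simp }
      moreover
      { assume hh: "oA \<alpha> u v" then have "u \<noteq> v" using oA_irrefl[OF al v] by blast
        then have ?thesis using lamOf_lt[OF al u v hh] unfolding \<mu>_def by simp }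
      moreover
      { assume hh: "oA \<alpha> v u" then have "u \<noteq> v" using oA_irrefl[OF al v] by blast
        then have ?thesis using lamOf_gt[OF al u v hh] unfolding \<mu>_def by simp }
      ultimately show ?thesis by blast
    qed
  qed
  have nn: "\<forall>c\<in>?S. 0 \<le> \<mu> c" using th h unfolding \<mu>_def by auto
  have s1: "sum \<mu> ?S = 1" using sum_lamOf[OF al] lamq h by simp
  have f1: "fst (\<Sum>c\<in>?S. \<mu> c *\<^sub>R c) = x" using fst_lamOf[OF al, where U=\<mu> and v=v and l=l] lamq h by simp
  have trm: "((if u \<in> Pup \<alpha> v then \<mu> (up u l) * (a u + l) else 0) + (if u \<in> Qlo \<alpha> v then \<mu> (lo u l) * (a u + l - 1) else 0))
      = lam u * a u + (real_of_int l - 1) * lam u + ((if oA \<alpha> u v then lam u else 0) + (if u = v then \<theta> else 0))"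
    if u: "u \<in> Vt \<alpha>" for u
  proof -
    have lu: "lam u = lamOf \<mu> \<alpha> v l u" using lamq by simp
    have "u = v \<or> oA \<alpha> u v \<or> oA \<alpha> v u" using oA_total[OF al u v] by blast
    moreover
    { assume e: "u = v"
      then have ?thesis using v_PQ[OF v] oA_irrefl[OF al v] unfolding lu lamOf_def \<mu>_def by (simp add: algebra_simps) }
    moreover
    { assume hh: "oA \<alpha> u v"
      then have ?thesis using inP_lt[OF al u v hh] oA_irrefl[OF al u] unfolding lu lamOf_def by (auto simp add: algebra_simps) }
    moreover
    { assume hh: "oA \<alpha> v u"
      then have ?thesis using inQ_gt[OF al u v hh] oA_asym[OF al v u hh] oA_irrefl[OF al u] unfolding lu lamOf_def by (auto simp add: algebra_simps) }
    ultimately show ?thesis by blast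
  qed
  have "snd (\<Sum>c\<in>?S. \<mu> c *\<^sub>R c) = (\<Sum>u\<in>Vt \<alpha>. lam u * a u + (real_of_int l - 1) * lam u + ((if oA \<alpha> u v then lam u else 0) + (if u = v then \<theta> else 0)))"
    unfolding snd_lamOf[OF al] by (rule sum.cong[OF refl]) (rule trm)
  also have "\<dots> = (\<Sum>u\<in>Vt \<alpha>. lam u * a u) + (real_of_int l - 1) * sum lam (Vt \<alpha>) + Cl lam \<alpha> v + \<theta>"
  proof -
    have e1: "(\<Sum>u\<in>Vt \<alpha>. (if oA \<alpha> u v then lam u else 0)) = Cl lam \<alpha> v"
      unfolding Cl_def by (simp add: sum.inter_filter[OF finVt[OF al]])
    have e2: "(\<Sum>u\<in>Vt \<alpha>. (if u = v then \<theta> else 0)) = \<theta>"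
      using v finVt[OF al] by simp
    have e3: "(\<Sum>u\<in>Vt \<alpha>. (real_of_int l - 1) * lam u) = (real_of_int l - 1) * sum lam (Vt \<alpha>)"
      by (simp add: sum_distrib_left)
    show ?thesis by (simp only: sum.distrib e1 e2 e3 add.assoc)
  qed
  finally have s2: "snd (\<Sum>c\<in>?S. \<mu> c *\<^sub>R c) = (\<Sum>u\<in>Vt \<alpha>. lam u * a u) + (real_of_int l - 1) + t"
    using h \<theta>_def by simp
  have "(\<Sum>c\<in>?S. \<mu> c *\<^sub>R c) = (x, (\<Sum>u\<in>Vt \<alpha>. lam u * a u) + (real_of_int l - 1) + t)"
    using f1 s2 by (simp add: prod_eq_iff)
  then show ?thesis unfolding convex_hull_finite[OF finVtY[OF al]] lam_def[symmetric]
    using nn s1 by blast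
qed

end

context LCsetup begin

lemma Y_surj:
  assumes M: "M1 < M2"
  shows "\<exists>x\<in>(\<Union>\<gamma>\<in>J_idx I Vt M1 M2. convex hull (VtY \<omega> Vt ord \<gamma>)). y - x \<in> {(t, of_int ((M2 - M1) * k)) | t k. t \<in> L}"
proof -
  obtain x1 where x1: "x1 \<in> (\<Union>\<alpha>\<in>I. convex hull (Vt \<alpha>))" "fst y - x1 \<in> L" using LC_iv1[of "fst y"] by blast
  then obtain \<alpha> where al: "\<alpha> \<in> I" and x: "x1 \<in> convex hull (Vt \<alpha>)" by blast
  define lam where "lam = bary (Vt \<alpha>) x1"
  note h = bhX[OF al x, folded lam_def]
  define B where "B = (\<Sum>u\<in>Vt \<alpha>. lam u * a u)"
  define N where "N = real_of_int (M2 - M1)"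
  have N0: "N > 0" using M N_def by simp
  define p where "p = snd y - B - (real_of_int M1 - 1)"
  define k where "k = \<lfloor>p / N\<rfloor>"
  have k1: "of_int k * N \<le> p" using floor_divide_lower[OF N0] k_def by blast
  have k2: "p < (of_int k + 1) * N" using floor_divide_upper[OF N0] k_def by blast
  define s where "s = snd y - of_int ((M2 - M1) * k)"
  define \<tau> where "\<tau> = s - B"
  have tau1: "real_of_int M1 - 1 \<le> \<tau>" and tau2: "\<tau> < real_of_int M2 - 1"
    using k1 k2 unfolding \<tau>_def s_def p_def N_def by (simp_all add: algebra_simps)
  define l where "l = \<lfloor>\<tau>\<rfloor> + 1"
  define t where "t = \<tau> - of_int \<lfloor>\<tau>\<rfloor>"
  have t01: "0 \<le> t" "t \<le> 1" unfolding t_def by linarith+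
  have l1: "M1 \<le> l"
  proof -
    have "M1 - 1 \<le> \<lfloor>\<tau>\<rfloor>" using tau1 by (simp add: le_floor_iff)
    then show ?thesis unfolding l_def by simp
  qed
  have l2: "l < M2"
  proof -
    have "\<lfloor>\<tau>\<rfloor> < M2 - 1" using tau2 by (simp add: floor_less_iff)
    then show ?thesis unfolding l_def by simp
  qed
  obtain v where v: "v \<in> Vt \<alpha>" "Cl lam \<alpha> v \<le> t" "t \<le> Cl lam \<alpha> v + lam v"
  proof -
    have "\<forall>w\<in>Vt \<alpha>. 0 \<le> lam w" "sum lam (Vt \<alpha>) = 1" using h by auto
    from exists_v[OF al this t01] show ?thesis using that by blast
  qed
  have pt: "(x1, B + (real_of_int l - 1) + t) \<in> convex hull (VtY \<omega> Vt ord (\<alpha>, v, l))"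
    using construct[OF al x v(1), of t l] v lam_def B_def by simp
  have eqs: "B + (real_of_int l - 1) + t = s" unfolding l_def t_def \<tau>_def by simp
  have J: "(\<alpha>, v, l) \<in> J_idx I Vt M1 M2" unfolding J_idx_def using al v l1 l2 by simp
  have "y - (x1, s) = (fst y - x1, of_int ((M2 - M1) * k))" unfolding s_def by (simp add: prod_eq_iff)
  then have "y - (x1, s) \<in> {(t, of_int ((M2 - M1) * k)) | t k. t \<in> L}" using x1(2) by blast
  then show ?thesis using J pt eqs by (intro bexI[of _ "(x1, s)"]) auto
qed

end

context LCsetup begin

lemma interior_pos:
  assumes al: "\<alpha> \<in> I" and v: "v \<in> Vt \<alpha>" and z: "z \<in> interior (convex hull (VtY \<omega> Vt ord (\<alpha>, v, l)))"
  shows "\<forall>c\<in>VtY \<omega> Vt ord (\<alpha>, v, l). bary (VtY \<omega> Vt ord (\<alpha>, v, l)) z c > 0"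
proof -
  let ?S = "VtY \<omega> Vt ord (\<alpha>, v, l)"
  have "\<not> card ?S \<le> DIM('a \<times> real)" using cardVtY[OF al v] by simp
  then obtain u where u: "\<forall>x\<in>?S. 0 < u x" "sum u ?S = 1" "(\<Sum>x\<in>?S. u x *\<^sub>R x) = z"
    using z interior_convex_hull_explicit_minimal[OF indVtY[OF al v]] by auto
  define u' where "u' = (\<lambda>c. if c \<in> ?S then u c else 0)"
  have 1: "sum u' ?S = 1" using u(2) unfolding u'_def by simp
  have 2: "(\<Sum>c\<in>?S. u' c *\<^sub>R c) = z" using u(3) unfolding u'_def by simp
  have "bary ?S z = u'" by (rule bary_unique[OF finVtY[OF al] indVtY[OF al v] _ 1 2]) (simp add: u'_def)
  then show ?thesis using u(1) unfolding u'_def by simp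
qed

lemma tau_interior:
  assumes al: "\<alpha> \<in> I" and v: "v \<in> Vt \<alpha>" and z: "z \<in> interior (convex hull (VtY \<omega> Vt ord (\<alpha>, v, l)))"
  shows "real_of_int l - 1 < tau \<alpha> z \<and> tau \<alpha> z < real_of_int l"
proof -
  let ?S = "VtY \<omega> Vt ord (\<alpha>, v, l)"
  have zh: "z \<in> convex hull ?S" using z interior_subset by blast
  define \<mu> where "\<mu> = bary ?S z"
  note S = ystruct[OF al v zh, folded \<mu>_def]
  have pos: "\<forall>c\<in>?S. \<mu> c > 0" using interior_pos[OF al v z] \<mu>_def by simp
  have "up v l \<in> ?S" "lo v l \<in> ?S" unfolding VtY_eq using v_PQ[OF v] by auto
  then have p1: "\<mu> (up v l) > 0" and p2: "\<mu> (lo v l) > 0" using pos by auto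
  define lam where "lam = lamOf \<mu> \<alpha> v l"
  have lnn: "\<forall>w. 0 \<le> lam w" using S(3) unfolding lam_def lamOf_def by simp
  have ls: "sum lam (Vt \<alpha>) = 1" using S(5) sum_lamOf[OF al] lam_def by metis
  have lv: "lam v = \<mu> (up v l) + \<mu> (lo v l)" using lamOf_v[OF v] lam_def by simp
  have Cv: "0 \<le> Cl lam \<alpha> v" "Cl lam \<alpha> v + lam v \<le> 1"
    using Cl_nonneg Cl_le1[OF al v] lnn ls by auto
  show ?thesis using S(2) p1 p2 lv Cv lam_def by simp
qed

lemma fst_interior:
  assumes z: "z \<in> interior (convex hull (VtY \<omega> Vt ord (\<alpha>, v, l)))"
  shows "fst z \<in> interior (convex hull (Vt \<alpha>))"
proof -
  let ?S = "VtY \<omega> Vt ord (\<alpha>, v, l)"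
  have o: "open (fst ` interior (convex hull ?S))" by (rule open_image_fst) simp
  have "fst ` interior (convex hull ?S) \<subseteq> convex hull (Vt \<alpha>)"
    using fst_hull interior_subset by blast
  then have "fst ` interior (convex hull ?S) \<subseteq> interior (convex hull (Vt \<alpha>))"
    using interior_maximal o by blast
  then show ?thesis using z by blast
qed

lemma J_elem: "\<gamma> \<in> J_idx I Vt M1 M2 \<Longrightarrow> \<exists>\<alpha> v l. \<gamma> = (\<alpha>, v, l) \<and> \<alpha> \<in> I \<and> v \<in> Vt \<alpha> \<and> M1 \<le> l \<and> l < M2"
  unfolding J_idx_def by auto

lemma Y_inj:
  assumes M: "M1 < M2"
    and z: "z \<in> (\<Union>\<gamma>\<in>J_idx I Vt M1 M2. interior (convex hull (VtY \<omega> Vt ord \<gamma>)))"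
    and z': "z' \<in> (\<Union>\<gamma>\<in>J_idx I Vt M1 M2. interior (convex hull (VtY \<omega> Vt ord \<gamma>)))"
    and d: "z - z' \<in> {(t, of_int ((M2 - M1) * k)) | t k. t \<in> L}"
  shows "z = z'"
proof -
  obtain \<gamma> where g: "\<gamma> \<in> J_idx I Vt M1 M2" "z \<in> interior (convex hull (VtY \<omega> Vt ord \<gamma>))" using z by blast
  obtain \<alpha> v l where g1: "\<gamma> = (\<alpha>, v, l)" "\<alpha> \<in> I" "v \<in> Vt \<alpha>" "M1 \<le> l" "l < M2" using J_elem[OF g(1)] by blast
  obtain \<gamma>' where g': "\<gamma>' \<in> J_idx I Vt M1 M2" "z' \<in> interior (convex hull (VtY \<omega> Vt ord \<gamma>'))" using z' by blast
  obtain \<alpha>' v' l' where g1': "\<gamma>' = (\<alpha>', v', l')" "\<alpha>' \<in> I" "v' \<in> Vt \<alpha>'" "M1 \<le> l'" "l' < M2" using J_elem[OF g'(1)] by blast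
  obtain t k where tk: "z - z' = (t, of_int ((M2 - M1) * k))" "t \<in> L" using d by blast
  have zi: "z \<in> interior (convex hull (VtY \<omega> Vt ord (\<alpha>, v, l)))" using g(2) g1(1) by simp
  have zi': "z' \<in> interior (convex hull (VtY \<omega> Vt ord (\<alpha>', v', l')))" using g'(2) g1'(1) by simp
  have f1: "fst z \<in> interior (convex hull (Vt \<alpha>))" using fst_interior[OF zi] .
  have f2: "fst z' \<in> interior (convex hull (Vt \<alpha>'))" using fst_interior[OF zi'] .
  have "fst z - fst z' = t" using tk(1) by (simp add: prod_eq_iff)
  then have fe: "fst z = fst z'" using LC_iv2[OF f1 g1(2) f2 g1'(2)] tk(2) by simp
  have h1: "fst z \<in> convex hull (Vt \<alpha>)" using f1 interior_subset by blast
  have "fst z' \<in> convex hull (Vt \<alpha>')" using f2 interior_subset by blast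
  then have h2: "fst z \<in> convex hull (Vt \<alpha>')" using fe by simp
  have be: "bary (Vt \<alpha>) (fst z) = bary (Vt \<alpha>') (fst z)" by (rule bary_agree[OF g1(2) g1'(2) h1 h2])
  have se: "(\<Sum>u\<in>Vt \<alpha>. bary (Vt \<alpha>) (fst z) u * A u) = (\<Sum>u\<in>Vt \<alpha>'. bary (Vt \<alpha>') (fst z) u * A u)"
    unfolding be[symmetric] by (rule sum_agree[OF g1(2) g1'(2)]) (use bhX[OF g1(2) h1] bhX[OF g1'(2) h2] be in auto)
  have "tau \<alpha> z - tau \<alpha>' z' = snd z - snd z'" unfolding tau_def Om_def fe[symmetric] se by simp
  also have "\<dots> = of_int ((M2 - M1) * k)" using tk(1) by (simp add: prod_eq_iff)
  finally have e: "tau \<alpha> z - tau \<alpha>' z' = of_int ((M2 - M1) * k)" .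
  have b1: "real_of_int l - 1 < tau \<alpha> z \<and> tau \<alpha> z < real_of_int l" using tau_interior[OF g1(2,3) zi] .
  have b2: "real_of_int l' - 1 < tau \<alpha>' z' \<and> tau \<alpha>' z' < real_of_int l'" using tau_interior[OF g1'(2,3) zi'] .
  have r: "real_of_int M1 \<le> real_of_int l" "real_of_int l \<le> real_of_int M2 - 1"
    "real_of_int M1 \<le> real_of_int l'" "real_of_int l' \<le> real_of_int M2 - 1"
    using g1(4,5) g1'(4,5) by linarith+
  have "real_of_int ((M2 - M1) * k) < real_of_int (M2 - M1)" "real_of_int (- (M2 - M1)) < real_of_int ((M2 - M1) * k)"
    unfolding e[symmetric] using b1 b2 r by simp_all
  then have "(M2 - M1) * k < M2 - M1" "- (M2 - M1) < (M2 - M1) * k" by (simp_all only: of_int_less_iff)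
  then have "(M2 - M1) * k < (M2 - M1) * 1" "(M2 - M1) * (-1) < (M2 - M1) * k" by simp_all
  moreover have pM: "0 < M2 - M1" using M by simp
  ultimately have "k < 1" "-1 < k" using mult_less_cancel_left_pos[OF pM] by blast+
  then have "k = 0" by simp
  then show ?thesis using tk(1) fe by (simp add: prod_eq_iff)
qed

end

theorem proposition1:
  fixes L :: "'a::euclidean_space set"
    and I :: "'i set" and Vt :: "'i \<Rightarrow> 'a set" and ord :: "'i \<Rightarrow> 'a \<Rightarrow> 'a \<Rightarrow> bool"
    and \<omega> :: "'a \<Rightarrow> real" and M1 M2 :: int
  assumes "full_lattice L"
    and "Lambda_complex L I Vt ord"
    and "M1 < M2"
    and "linear \<omega>"
  shows "Lambda_complex {(t, of_int ((M2 - M1) * k)) | t k. t \<in> L}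
           (J_idx I Vt M1 M2) (VtY \<omega> Vt ord) (ordY ord)
       \<and> (\<forall>\<alpha> v l. (\<alpha>, v, l) \<in> J_idx I Vt M1 M2 \<longrightarrow>
            (\<forall>\<kappa>\<in>convex hull (VtY \<omega> Vt ord (\<alpha>, v, l)).
               A_fun \<omega> v + of_int l - 1 \<le> \<omega> (fst \<kappa>) + snd \<kappa> \<and>
               \<omega> (fst \<kappa>) + snd \<kappa> \<le> A_fun \<omega> v + of_int l))"
proof -
  interpret LCsetup L I Vt ord \<omega> unfolding LCsetup_def using assms(2,4) by blast
  let ?L = "{(t, of_int ((M2 - M1) * k)) | t k. t \<in> L} :: ('a \<times> real) set"
  let ?J = "J_idx I Vt M1 M2"
  have oc: "ordered_complex ?J (VtY \<omega> Vt ord) (ordY ord)"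
    unfolding ordered_complex_def
  proof
    fix \<gamma> assume gJ: "\<gamma> \<in> ?J"
    obtain \<alpha> v l where g: "\<gamma> = (\<alpha>, v, l)" "\<alpha> \<in> I" "v \<in> Vt \<alpha>" using J_elem[OF gJ] by blast
    show "finite (VtY \<omega> Vt ord \<gamma>) \<and> card (VtY \<omega> Vt ord \<gamma>) = DIM('a \<times> real) + 1 \<and>
          \<not> affine_dependent (VtY \<omega> Vt ord \<gamma>) \<and> strict_total_on (VtY \<omega> Vt ord \<gamma>) (ordY ord \<gamma>)"
      unfolding g(1) using finVtY[OF g(2)] cardVtY[OF g(2,3)] indVtY[OF g(2,3)] ordY_total[OF g(2,3)] by blast
  qed
  have i: "\<forall>\<alpha>\<in>?J. \<forall>\<beta>\<in>?J. convex hull (VtY \<omega> Vt ord \<alpha>) \<inter> convex hull (VtY \<omega> Vt ord \<beta>) = {} \<or>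
         convex hull (VtY \<omega> Vt ord \<alpha>) \<inter> convex hull (VtY \<omega> Vt ord \<beta>) = convex hull (VtY \<omega> Vt ord \<alpha> \<inter> VtY \<omega> Vt ord \<beta>)"
  proof (intro ballI)
    fix \<gamma> \<gamma>' assume "\<gamma> \<in> ?J" "\<gamma>' \<in> ?J"
    note gg = this
    obtain \<alpha> v l where ga: "\<gamma> = (\<alpha>, v, l)" "\<alpha> \<in> I" "v \<in> Vt \<alpha>"
      using J_elem[OF gg(1)] by blast
    obtain \<alpha>' v' l' where gb: "\<gamma>' = (\<alpha>', v', l')" "\<alpha>' \<in> I" "v' \<in> Vt \<alpha>'"
      using J_elem[OF gg(2)] by blast
    note g = ga gb
    show "convex hull (VtY \<omega> Vt ord \<gamma>) \<inter> convex hull (VtY \<omega> Vt ord \<gamma>') = {} \<or>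
         convex hull (VtY \<omega> Vt ord \<gamma>) \<inter> convex hull (VtY \<omega> Vt ord \<gamma>') = convex hull (VtY \<omega> Vt ord \<gamma> \<inter> VtY \<omega> Vt ord \<gamma>')"
      unfolding g(1,4) by (rule Y_i[OF g(2,3,5,6)])
  qed
  have ii: "\<forall>\<alpha>\<in>?J. \<forall>\<beta>\<in>?J. \<forall>v\<in>VtY \<omega> Vt ord \<alpha> \<inter> VtY \<omega> Vt ord \<beta>. \<forall>w\<in>VtY \<omega> Vt ord \<alpha> \<inter> VtY \<omega> Vt ord \<beta>.
           ordY ord \<alpha> v w \<longleftrightarrow> ordY ord \<beta> v w"
  proof (intro ballI)
    fix \<gamma> \<gamma>' \<rho> \<sigma> assume "\<gamma> \<in> ?J" "\<gamma>' \<in> ?J" and r: "\<rho> \<in> VtY \<omega> Vt ord \<gamma> \<inter> VtY \<omega> Vt ord \<gamma>'"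
      and s: "\<sigma> \<in> VtY \<omega> Vt ord \<gamma> \<inter> VtY \<omega> Vt ord \<gamma>'"
    note gg = this
    obtain \<alpha> v l where ga: "\<gamma> = (\<alpha>, v, l)" "\<alpha> \<in> I" "v \<in> Vt \<alpha>"
      using J_elem[OF gg(1)] by blast
    obtain \<alpha>' v' l' where gb: "\<gamma>' = (\<alpha>', v', l')" "\<alpha>' \<in> I" "v' \<in> Vt \<alpha>'"
      using J_elem[OF gg(2)] by blast
    note g = ga gb
    show "ordY ord \<gamma> \<rho> \<sigma> \<longleftrightarrow> ordY ord \<gamma>' \<rho> \<sigma>"
      using Y_ii[OF g(2,5)] r s unfolding g(1,4) by blast
  qed
  have iii: "\<forall>\<alpha>\<in>?J. \<forall>\<alpha>'\<in>?J. \<forall>v\<in>VtY \<omega> Vt ord \<alpha>. \<forall>w\<in>VtY \<omega> Vt ord \<alpha>. \<forall>t\<in>?L.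
         v + t \<in> VtY \<omega> Vt ord \<alpha>' \<longrightarrow> w + t \<in> VtY \<omega> Vt ord \<alpha>' \<longrightarrow> (ordY ord \<alpha> v w \<longleftrightarrow> ordY ord \<alpha>' (v + t) (w + t))"
  proof (intro ballI impI)
    fix \<gamma> \<gamma>' \<rho> \<sigma> \<tau> assume "\<gamma> \<in> ?J" "\<gamma>' \<in> ?J" and r: "\<rho> \<in> VtY \<omega> Vt ord \<gamma>" and s: "\<sigma> \<in> VtY \<omega> Vt ord \<gamma>"
      and ta: "\<tau> \<in> ?L" and r': "\<rho> + \<tau> \<in> VtY \<omega> Vt ord \<gamma>'" and s': "\<sigma> + \<tau> \<in> VtY \<omega> Vt ord \<gamma>'"
    note gg = this
    obtain \<alpha> v l where ga: "\<gamma> = (\<alpha>, v, l)" "\<alpha> \<in> I" "v \<in> Vt \<alpha>"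
      using J_elem[OF gg(1)] by blast
    obtain \<alpha>' v' l' where gb: "\<gamma>' = (\<alpha>', v', l')" "\<alpha>' \<in> I" "v' \<in> Vt \<alpha>'"
      using J_elem[OF gg(2)] by blast
    note g = ga gb
    obtain t k where tk: "\<tau> = (t, of_int ((M2 - M1) * k))" "t \<in> L" using ta by blast
    show "ordY ord \<gamma> \<rho> \<sigma> \<longleftrightarrow> ordY ord \<gamma>' (\<rho> + \<tau>) (\<sigma> + \<tau>)"
      unfolding g(1,4) tk(1) by (rule Y_iii[OF g(2,5) tk(2)]) (use r s r' s' g tk in simp_all)
  qed
  have v: "\<forall>\<alpha>\<in>?J. \<forall>\<alpha>'\<in>?J. \<forall>x\<in>convex hull (VtY \<omega> Vt ord \<alpha>). \<forall>t\<in>?L. x + t \<in> convex hull (VtY \<omega> Vt ord \<alpha>') \<longrightarrow>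
         SpVt (VtY \<omega> Vt ord \<alpha>') (x + t) = (\<lambda>v. v + t) ` SpVt (VtY \<omega> Vt ord \<alpha>) x"
  proof (intro ballI impI)
    fix \<gamma> \<gamma>' z \<tau> assume "\<gamma> \<in> ?J" "\<gamma>' \<in> ?J" and z: "z \<in> convex hull (VtY \<omega> Vt ord \<gamma>)"
      and ta: "\<tau> \<in> ?L" and z': "z + \<tau> \<in> convex hull (VtY \<omega> Vt ord \<gamma>')"
    note gg = this
    obtain \<alpha> v l where ga: "\<gamma> = (\<alpha>, v, l)" "\<alpha> \<in> I" "v \<in> Vt \<alpha>"
      using J_elem[OF gg(1)] by blast
    obtain \<alpha>' v' l' where gb: "\<gamma>' = (\<alpha>', v', l')" "\<alpha>' \<in> I" "v' \<in> Vt \<alpha>'"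
      using J_elem[OF gg(2)] by blast
    note g = ga gb
    obtain t k where tk: "\<tau> = (t, of_int ((M2 - M1) * k))" "t \<in> L" using ta by blast
    show "SpVt (VtY \<omega> Vt ord \<gamma>') (z + \<tau>) = (\<lambda>v. v + \<tau>) ` SpVt (VtY \<omega> Vt ord \<gamma>) z"
      unfolding g(1,4) tk(1) by (rule Y_v[OF g(2,3,5,6) _ tk(2)]) (use z z' g tk in simp_all)
  qed
  have LCY: "Lambda_complex ?L ?J (VtY \<omega> Vt ord) (ordY ord)"
    unfolding Lambda_complex_def
  proof (intro conjI oc i ii iii v allI ballI impI)
    fix y show "\<exists>x\<in>(\<Union>\<alpha>\<in>?J. convex hull (VtY \<omega> Vt ord \<alpha>)). y - x \<in> ?L" by (rule Y_surj[OF assms(3)])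
  next
    fix x x' assume "x \<in> (\<Union>\<alpha>\<in>?J. interior (convex hull (VtY \<omega> Vt ord \<alpha>)))"
      "x' \<in> (\<Union>\<alpha>\<in>?J. interior (convex hull (VtY \<omega> Vt ord \<alpha>)))" "x - x' \<in> ?L"
    then show "x = x'" by (rule Y_inj[OF assms(3)])
  qed
  have bnd: "\<forall>\<alpha> v l. (\<alpha>, v, l) \<in> ?J \<longrightarrow>
            (\<forall>\<kappa>\<in>convex hull (VtY \<omega> Vt ord (\<alpha>, v, l)).
               A_fun \<omega> v + of_int l - 1 \<le> \<omega> (fst \<kappa>) + snd \<kappa> \<and>
               \<omega> (fst \<kappa>) + snd \<kappa> \<le> A_fun \<omega> v + of_int l)"
  proof (intro allI impI ballI)
    fix \<alpha> v l \<kappa> assume "(\<alpha>, v, l) \<in> ?J" and k: "\<kappa> \<in> convex hull (VtY \<omega> Vt ord (\<alpha>, v, l))"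
    then have "\<alpha> \<in> I" "v \<in> Vt \<alpha>" unfolding J_idx_def by auto
    then show "A_fun \<omega> v + of_int l - 1 \<le> \<omega> (fst \<kappa>) + snd \<kappa> \<and> \<omega> (fst \<kappa>) + snd \<kappa> \<le> A_fun \<omega> v + of_int l"
      using Om_bounds[OF _ _ k] unfolding Om_def by blast
  qed
  show ?thesis using LCY bnd by blast
qed

end
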